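(* Let $(V,\mathcal{E})$ be a forward or backward neutral genealogy model and let $\sigma\in\mathcal{P}$ be uniform and independent of $\mathcal{E}$. Then: 1. $\sigma(\mathcal{E})$ is completely neutral. 2(a). If $(V,\mathcal{E})$ is forward neutral, then for each $n$, $(\sigma(\mathcal{E}_m))_{m\ge n}$ is independent of $(\sigma_m)_{m\le n}$. 2(b). If $(V,\mathcal{E})$ is backward neutral, then for each $n$, $(\sigma(\mathcal{E}_m))_{m<n}$ is independent of $(\sigma_m)_{m\ge n}$.
   Context: Data: $\tau\in\mathbb{N}\cup\{\infty\}$, positive integers $(X_n)_{n<\tau}$, vectors $k_n=(k_n(i))_{i=1}^{X_n}$ of nonnegative integers with $\sum_ik_n(i)=X_{n+1}$. $V_n=\{(n,i):1\le i\le X_n\}$, $V=\bigcup_nV_n$. A genealogy model is a random edge set $\mathcal{E}\subset\bigcup_nV_n\times V_{n+1}$ such that each vertex of $V_{n+1}$ has exactly one parent in $V_n$ and the out-degrees in $V_n$ are a permutation of $k_n$. $\mathcal{E}_n=\mathcal{E}\cap(V_n\times V_{n+1})$, $K_n=(\mathrm{od}((n,i)))_i$, $\Xi_n$ = partition of $V_{n+1}$ into sets of vertices with a common parent. Forward neutral: for all $n$, $K_n$ is exchangeable and independent of $(\mathcal{E}_m)_{m<n}$. Backward neutral: for all $n$, $\Xi_n$ is exchangeable (its law is invariant under relabelling $V_{n+1}$ by any fixed permutation) and independent of $(\mathcal{E}_m)_{m>n}$. $\mathcal{E}_n$ is exchangeable if $\mathcal{E}_n$ has the same law as $\{(\pi(v),\pi'(w)):(v,w)\in\mathcal{E}_n\}$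 for every fixed permutation $\pi$ of $V_n$ and $\pi'$ of $V_{n+1}$. $\mathcal{E}$ is completely neutral if $(\mathcal{E}_n)_n$ are independent and each is exchangeable. $\mathcal{P}$ is the set of permutations of $V$ mapping each $V_n$ to itself, written $\sigma=(\sigma_n)$ with $\sigma_n=\sigma|_{V_n}$; $\sigma$ is uniform if the $\sigma_n$ are independent uniform permutations. $\sigma(E)=\{(\sigma(v),\sigma(w)):(v,w)\in E\}$, and $\sigma(\mathcal{E}_m)=\{(\sigma_m(v),\sigma_{m+1}(w)):(v,w)\in\mathcal{E}_m\}$. *)

theory Defs
  imports "HOL-Probability.Probability" "HOL-Combinatorics.Permutations"
begin

text \<open>Vertices are pairs (n,i); edges are pairs of vertices. Generations are n with enat n < tau.\<close>

type_synonym vert = "nat \<times> nat"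
type_synonym edge = "vert \<times> vert"

definition Vg :: "(nat \<Rightarrow> nat) \<Rightarrow> nat \<Rightarrow> vert set" where
  "Vg X n = {n} \<times> {1..X n}"

definition Vall :: "enat \<Rightarrow> (nat \<Rightarrow> nat) \<Rightarrow> vert set" where
  "Vall \<tau> X = (\<Union>n\<in>{n. enat n < \<tau>}. Vg X n)"

definition layer :: "(nat \<Rightarrow> nat) \<Rightarrow> edge set \<Rightarrow> nat \<Rightarrow> edge set" where
  "layer X E n = E \<inter> (Vg X n \<times> Vg X (Suc n))"

definition od :: "edge set \<Rightarrow> vert \<Rightarrow> nat" where
  "od E v = card {w. (v, w) \<in> E}"

definition Kvec :: "(nat \<Rightarrow> nat) \<Rightarrow> edge set \<Rightarrow> nat \<Rightarrow> (nat \<Rightarrow> nat)" where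
  "Kvec X E n = (\<lambda>i\<in>{1..X n}. od E (n, i))"

definition Xi :: "(nat \<Rightarrow> nat) \<Rightarrow> edge set \<Rightarrow> nat \<Rightarrow> vert set set" where
  "Xi X E n = {{w \<in> Vg X (Suc n). (v, w) \<in> E} | v. v \<in> Vg X n} - {{}}"

definition genealogy :: "enat \<Rightarrow> (nat \<Rightarrow> nat) \<Rightarrow> (nat \<Rightarrow> nat \<Rightarrow> nat) \<Rightarrow> edge set \<Rightarrow> bool" where
  "genealogy \<tau> X k E \<longleftrightarrow>
     E \<subseteq> (\<Union>n\<in>{n. enat (Suc n) < \<tau>}. Vg X n \<times> Vg X (Suc n)) \<and>
     (\<forall>n. enat (Suc n) < \<tau> \<longrightarrow>
        (\<forall>w\<in>Vg X (Suc n). \<exists>!v. v \<in> Vg X n \<and> (v, w) \<in> E) \<and>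
        (\<exists>p. p permutes {1..X n} \<and> (\<forall>i\<in>{1..X n}. od E (n, i) = k n (p i))))"

definition genealogy_data :: "enat \<Rightarrow> (nat \<Rightarrow> nat) \<Rightarrow> (nat \<Rightarrow> nat \<Rightarrow> nat) \<Rightarrow> bool" where
  "genealogy_data \<tau> X k \<longleftrightarrow>
     (\<forall>n. enat n < \<tau> \<longrightarrow> 0 < X n) \<and>
     (\<forall>n. enat (Suc n) < \<tau> \<longrightarrow> (\<Sum>i=1..X n. k n i) = X (Suc n))"

definition genealogy_model ::
  "'w measure \<Rightarrow> enat \<Rightarrow> (nat \<Rightarrow> nat) \<Rightarrow> (nat \<Rightarrow> nat \<Rightarrow> nat) \<Rightarrow> ('w \<Rightarrow> edge set) \<Rightarrow> bool" where
  "genealogy_model M \<tau> X k \<E> \<longleftrightarrow>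
     (\<forall>\<omega>\<in>space M. genealogy \<tau> X k (\<E> \<omega>)) \<and>
     (\<forall>n. enat (Suc n) < \<tau> \<longrightarrow> (\<lambda>\<omega>. layer X (\<E> \<omega>) n) \<in> M \<rightarrow>\<^sub>M count_space UNIV)"

text \<open>Independence of two random variables with possibly different value types
  (the library's indep_var requires equal types; this is its characterisation indep_var_eq).\<close>
definition indep_rv :: "'w measure \<Rightarrow> 'a measure \<Rightarrow> ('w \<Rightarrow> 'a) \<Rightarrow> 'b measure \<Rightarrow> ('w \<Rightarrow> 'b) \<Rightarrow> bool" where
  "indep_rv M S A T B \<longleftrightarrow>
     A \<in> M \<rightarrow>\<^sub>M S \<and> B \<in> M \<rightarrow>\<^sub>M T \<and>
     prob_space.indep_set M
       (sigma_sets (space M) {A -` U \<inter> space M | U. U \<in> sets S})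
       (sigma_sets (space M) {B -` U \<inter> space M | U. U \<in> sets T})"

abbreviation cs :: "'a measure" where "cs \<equiv> count_space UNIV"

definition forward_neutral ::
  "'w measure \<Rightarrow> enat \<Rightarrow> (nat \<Rightarrow> nat) \<Rightarrow> ('w \<Rightarrow> edge set) \<Rightarrow> bool" where
  "forward_neutral M \<tau> X \<E> \<longleftrightarrow>
     (\<forall>n. enat (Suc n) < \<tau> \<longrightarrow>
        (\<forall>p. p permutes {1..X n} \<longrightarrow>
           distr M cs (\<lambda>\<omega>. Kvec X (\<E> \<omega>) n) = distr M cs (\<lambda>\<omega>. Kvec X (\<E> \<omega>) n \<circ> p)) \<and>
        indep_rv M cs (\<lambda>\<omega>. Kvec X (\<E> \<omega>) n)
          (PiM {..<n} (\<lambda>_. cs)) (\<lambda>\<omega>. \<lambda>m\<in>{..<n}. layer X (\<E> \<omega>) m))"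

definition backward_neutral ::
  "'w measure \<Rightarrow> enat \<Rightarrow> (nat \<Rightarrow> nat) \<Rightarrow> ('w \<Rightarrow> edge set) \<Rightarrow> bool" where
  "backward_neutral M \<tau> X \<E> \<longleftrightarrow>
     (\<forall>n. enat (Suc n) < \<tau> \<longrightarrow>
        (\<forall>\<pi>. \<pi> permutes Vg X (Suc n) \<longrightarrow>
           distr M cs (\<lambda>\<omega>. Xi X (\<E> \<omega>) n) = distr M cs (\<lambda>\<omega>. (\<lambda>B. \<pi> ` B) ` Xi X (\<E> \<omega>) n)) \<and>
        indep_rv M cs (\<lambda>\<omega>. Xi X (\<E> \<omega>) n)
          (PiM {m. n < m \<and> enat (Suc m) < \<tau>} (\<lambda>_. cs))
          (\<lambda>\<omega>. \<lambda>m\<in>{m. n < m \<and> enat (Suc m) < \<tau>}. layer X (\<E> \<omega>) m))"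

definition exchangeable_layer ::
  "'w measure \<Rightarrow> (nat \<Rightarrow> nat) \<Rightarrow> ('w \<Rightarrow> edge set) \<Rightarrow> nat \<Rightarrow> bool" where
  "exchangeable_layer M X \<E> n \<longleftrightarrow>
     (\<forall>\<pi> \<pi>'. \<pi> permutes Vg X n \<longrightarrow> \<pi>' permutes Vg X (Suc n) \<longrightarrow>
        distr M cs (\<lambda>\<omega>. layer X (\<E> \<omega>) n) =
        distr M cs (\<lambda>\<omega>. map_prod \<pi> \<pi>' ` layer X (\<E> \<omega>) n))"

definition completely_neutral ::
  "'w measure \<Rightarrow> enat \<Rightarrow> (nat \<Rightarrow> nat) \<Rightarrow> ('w \<Rightarrow> edge set) \<Rightarrow> bool" where
  "completely_neutral M \<tau> X \<E> \<longleftrightarrow>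
     prob_space.indep_vars M (\<lambda>_. cs) (\<lambda>n \<omega>. layer X (\<E> \<omega>) n) {n. enat (Suc n) < \<tau>} \<and>
     (\<forall>n. enat (Suc n) < \<tau> \<longrightarrow> exchangeable_layer M X \<E> n)"

definition sig :: "(nat \<Rightarrow> nat) \<Rightarrow> ('w \<Rightarrow> vert \<Rightarrow> vert) \<Rightarrow> nat \<Rightarrow> 'w \<Rightarrow> vert \<Rightarrow> vert" where
  "sig X \<sigma> n \<omega> = (\<lambda>x. if x \<in> Vg X n then \<sigma> \<omega> x else x)"

text \<open>sigma is a random element of P (permutations of V preserving each V_n)
  that is uniform: the sigma_n are independent uniform permutations of V_n.\<close>
definition uniform_P :: "'w measure \<Rightarrow> enat \<Rightarrow> (nat \<Rightarrow> nat) \<Rightarrow> ('w \<Rightarrow> vert \<Rightarrow> vert) \<Rightarrow> bool" where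
  "uniform_P M \<tau> X \<sigma> \<longleftrightarrow>
     (\<forall>\<omega>\<in>space M. \<sigma> \<omega> permutes Vall \<tau> X \<and> (\<forall>n. enat n < \<tau> \<longrightarrow> \<sigma> \<omega> ` Vg X n = Vg X n)) \<and>
     prob_space.indep_vars M (\<lambda>_. cs) (sig X \<sigma>) {n. enat n < \<tau>} \<and>
     (\<forall>n. enat n < \<tau> \<longrightarrow>
        distr M cs (sig X \<sigma> n) = measure_pmf (pmf_of_set {p. p permutes Vg X n}))"

definition perm_edges :: "(vert \<Rightarrow> vert) \<Rightarrow> edge set \<Rightarrow> edge set" where
  "perm_edges s E = map_prod s s ` E"

definition sig_layer :: "(nat \<Rightarrow> nat) \<Rightarrow> ('w \<Rightarrow> vert \<Rightarrow> vert) \<Rightarrow> ('w \<Rightarrow> edge set) \<Rightarrow> nat \<Rightarrow> 'w \<Rightarrow> edge set" where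
  "sig_layer X \<sigma> \<E> m \<omega> = map_prod (sig X \<sigma> m \<omega>) (sig X \<sigma> (Suc m) \<omega>) ` layer X (\<E> \<omega>) m"

end

theory Submission
  imports Defs
begin

context prob_space begin

definition dv :: "('a \<Rightarrow> 'b) \<Rightarrow> bool" where
  "dv Y \<longleftrightarrow> (\<exists>R. finite R \<and> (\<forall>\<omega>\<in>space M. Y \<omega> \<in> R)) \<and> (\<forall>y. {\<omega>\<in>space M. Y \<omega> = y} \<in> events)"

lemma dv_ev: "dv Y \<Longrightarrow> {\<omega>\<in>space M. Y \<omega> = y} \<in> events"
  unfolding dv_def by auto

lemma dv_range: assumes "dv Y" obtains R where "finite R" "\<And>\<omega>. \<omega>\<in>space M \<Longrightarrow> Y \<omega> \<in> R"
  using assms unfolding dv_def by auto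

lemma dv_vimage: assumes "dv Y" shows "Y -` A \<inter> space M \<in> events"
proof -
  obtain R where R: "finite R" "\<And>\<omega>. \<omega>\<in>space M \<Longrightarrow> Y \<omega> \<in> R" using dv_range[OF assms] by blast
  have "Y -` A \<inter> space M = (\<Union>y\<in>R \<inter> A. {\<omega>\<in>space M. Y \<omega> = y})" using R by auto
  also have "\<dots> \<in> events" using R(1) dv_ev[OF assms] by (intro sets.finite_UN) auto
  finally show ?thesis .
qed

lemma dv_Collect: assumes "dv Y" shows "{\<omega>\<in>space M. P (Y \<omega>)} \<in> events"
proof -
  have e: "{\<omega>\<in>space M. P (Y \<omega>)} = Y -` {y. P y} \<inter> space M" by auto
  show ?thesis by (subst e) (rule dv_vimage[OF assms])
qed

lemma dv_meas: assumes "dv Y" shows "Y \<in> M \<rightarrow>\<^sub>M count_space UNIV"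
  by (rule measurableI) (auto intro: dv_vimage[OF assms])

lemma dv_comp: assumes "dv Y" shows "dv (\<lambda>\<omega>. f (Y \<omega>))"
proof -
  obtain R where R: "finite R" "\<And>\<omega>. \<omega>\<in>space M \<Longrightarrow> Y \<omega> \<in> R" using dv_range[OF assms] by blast
  show ?thesis unfolding dv_def
  proof (intro conjI allI exI[of _ "f ` R"])
    fix z show "{\<omega> \<in> space M. f (Y \<omega>) = z} \<in> events" using dv_Collect[OF assms, of "\<lambda>y. f y = z"] .
  qed (use R in auto)
qed

lemma dv_pair: assumes "dv Y" "dv Z" shows "dv (\<lambda>\<omega>. (Y \<omega>, Z \<omega>))"
proof -
  obtain R where R: "finite R" "\<And>\<omega>. \<omega>\<in>space M \<Longrightarrow> Y \<omega> \<in> R" using dv_range[OF assms(1)] by blast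
  obtain R' where R': "finite R'" "\<And>\<omega>. \<omega>\<in>space M \<Longrightarrow> Z \<omega> \<in> R'" using dv_range[OF assms(2)] by blast
  show ?thesis unfolding dv_def
  proof (intro conjI allI exI[of _ "R \<times> R'"])
    fix z :: "'b \<times> 'c"
    have "{\<omega> \<in> space M. (Y \<omega>, Z \<omega>) = z} = {\<omega> \<in> space M. Y \<omega> = fst z} \<inter> {\<omega> \<in> space M. Z \<omega> = snd z}"
      by (cases z) auto
    then show "{\<omega> \<in> space M. (Y \<omega>, Z \<omega>) = z} \<in> events" using dv_ev[OF assms(1)] dv_ev[OF assms(2)] by simp
  qed (use R R' in auto)
qed

lemma dv_of_meas: assumes "Y \<in> M \<rightarrow>\<^sub>M count_space UNIV" "finite R" "\<And>\<omega>. \<omega>\<in>space M \<Longrightarrow> Y \<omega> \<in> R"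
  shows "dv Y"
  unfolding dv_def
proof (intro conjI allI exI[of _ R])
  fix y have "{\<omega>\<in>space M. Y \<omega> = y} = Y -` {y} \<inter> space M" by auto
  then show "{\<omega>\<in>space M. Y \<omega> = y} \<in> events" using measurable_sets[OF assms(1)] by simp
qed (use assms in auto)

lemma ev_all: assumes "finite J" "\<And>j. j \<in> J \<Longrightarrow> dv (Y j)"
  shows "{\<omega>\<in>space M. \<forall>j\<in>J. Y j \<omega> = t j} \<in> events"
  using assms by (intro sets.sets_Collect_finite_All) (auto intro: dv_ev)

lemma dv_restrict: assumes "finite I" "\<And>i. i \<in> I \<Longrightarrow> dv (Y i)"
  shows "dv (\<lambda>\<omega>. \<lambda>i\<in>I. Y i \<omega>)"
proof -
  have "\<forall>i\<in>I. \<exists>R. finite R \<and> (\<forall>\<omega>\<in>space M. Y i \<omega> \<in> R)" using assms(2) unfolding dv_def by blast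
  then obtain R where R: "\<And>i. i\<in>I \<Longrightarrow> finite (R i) \<and> (\<forall>\<omega>\<in>space M. Y i \<omega> \<in> R i)" by metis
  show ?thesis unfolding dv_def
  proof (intro conjI allI)
    fix y :: "'b \<Rightarrow> 'c"
    show "{\<omega> \<in> space M. (\<lambda>i\<in>I. Y i \<omega>) = y} \<in> events"
    proof (cases "y \<in> extensional I")
      case True
      then have "{\<omega> \<in> space M. (\<lambda>i\<in>I. Y i \<omega>) = y} = {\<omega>\<in>space M. \<forall>j\<in>I. Y j \<omega> = y j}"
        by (auto simp: extensional_def fun_eq_iff)
      then show ?thesis using ev_all[OF assms] by simp
    next
      case False
      then have e: "{\<omega> \<in> space M. (\<lambda>i\<in>I. Y i \<omega>) = y} = {}" by auto
      show ?thesis by (subst e) (rule sets.empty_sets)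
    qed
  next
    show "\<exists>R. finite R \<and> (\<forall>\<omega>\<in>space M. (\<lambda>i\<in>I. Y i \<omega>) \<in> R)"
      using R assms(1) by (intro exI[of _ "PiE I R"]) (auto intro!: finite_PiE)
  qed
qed

lemma GI:
  fixes g :: "'b \<Rightarrow> real"
  assumes R: "finite R" and Y: "\<And>\<omega>. \<omega> \<in> space M \<Longrightarrow> Y \<omega> \<in> R"
    and Yev: "\<And>y. {\<omega>\<in>space M. Y \<omega> = y} \<in> events"
    and A: "A \<in> events"
  shows "integral\<^sup>L M (\<lambda>\<omega>. indicator A \<omega> * g (Y \<omega>)) = (\<Sum>y\<in>R. g y * prob (A \<inter> {\<omega>\<in>space M. Y \<omega> = y}))"
proof -
  have "integral\<^sup>L M (\<lambda>\<omega>. indicator A \<omega> * g (Y \<omega>)) = integral\<^sup>L M (\<lambda>\<omega>. \<Sum>y\<in>R. g y * indicator (A \<inter> {\<omega>\<in>space M. Y \<omega> = y}) \<omega>)"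
  proof (rule Bochner_Integration.integral_cong[OF refl])
    fix \<omega> assume w: "\<omega> \<in> space M"
    have "(\<Sum>y\<in>R. g y * indicator (A \<inter> {\<omega>\<in>space M. Y \<omega> = y}) \<omega>) = (\<Sum>y\<in>R. if y = Y \<omega> then g y * indicator A \<omega> else 0)"
      by (rule sum.cong) (auto simp: indicator_def w)
    also have "\<dots> = g (Y \<omega>) * indicator A \<omega>" using Y[OF w] R by (simp add: sum.delta')
    finally show "indicator A \<omega> * g (Y \<omega>) = (\<Sum>y\<in>R. g y * indicator (A \<inter> {\<omega>\<in>space M. Y \<omega> = y}) \<omega>)" by simp
  qed
  also have "\<dots> = (\<Sum>y\<in>R. g y * prob (A \<inter> {\<omega>\<in>space M. Y \<omega> = y}))"
    using A Yev by (subst Bochner_Integration.integral_sum) (auto intro!: integrable_mult_right integrable_real_indicator simp: Int_absorb2 sets.sets_into_space emeasure_eq_measure)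
  finally show ?thesis .
qed

lemma dv_GI:
  fixes g :: "'b \<Rightarrow> real"
  assumes "dv Y" "A \<in> events"
  obtains R where "finite R" "\<And>\<omega>. \<omega>\<in>space M \<Longrightarrow> Y \<omega> \<in> R"
    "integral\<^sup>L M (\<lambda>\<omega>. indicator A \<omega> * g (Y \<omega>)) = (\<Sum>y\<in>R. g y * prob (A \<inter> {\<omega>\<in>space M. Y \<omega> = y}))"
proof -
  obtain R where R: "finite R" "\<And>\<omega>. \<omega>\<in>space M \<Longrightarrow> Y \<omega> \<in> R" using dv_range[OF assms(1)] by blast
  have "integral\<^sup>L M (\<lambda>\<omega>. indicator A \<omega> * g (Y \<omega>)) = (\<Sum>y\<in>R. g y * prob (A \<inter> {\<omega>\<in>space M. Y \<omega> = y}))"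
    by (rule GI) (use R dv_ev[OF assms(1)] assms(2) in auto)
  then show ?thesis using R that by auto
qed

lemma total_prob:
  assumes R: "finite R" and Y: "\<And>\<omega>. \<omega> \<in> space M \<Longrightarrow> Y \<omega> \<in> R"
    and Yev: "\<And>y. {\<omega>\<in>space M. Y \<omega> = y} \<in> events"
    and A: "A \<in> events"
  shows "prob A = (\<Sum>y\<in>R. prob (A \<inter> {\<omega>\<in>space M. Y \<omega> = y}))"
  using GI[OF R Y Yev A, of "\<lambda>_. 1"] A by (simp add: Int_absorb2 sets.sets_into_space)

lemma integral_space_ind:
  "integral\<^sup>L M (\<lambda>\<omega>. g \<omega>) = integral\<^sup>L M (\<lambda>\<omega>. indicator (space M) \<omega> * (g \<omega> :: real))"
  by (rule Bochner_Integration.integral_cong) auto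

lemma IND:
  fixes g :: "'b \<Rightarrow> real"
  assumes ind: "indep_rv M (count_space UNIV) Y T Z" and Y: "dv Y" and U: "U \<in> sets T"
  shows "integral\<^sup>L M (\<lambda>\<omega>. indicator (Z -` U \<inter> space M) \<omega> * g (Y \<omega>)) = prob (Z -` U \<inter> space M) * integral\<^sup>L M (\<lambda>\<omega>. g (Y \<omega>))"
proof -
  have iset: "indep_set (sigma_sets (space M) {Y -` U \<inter> space M | U. U \<in> sets (count_space UNIV)})
       (sigma_sets (space M) {Z -` U \<inter> space M | U. U \<in> sets T})"
    using ind unfolding indep_rv_def by auto
  have Zmeas: "Z \<in> M \<rightarrow>\<^sub>M T" using ind unfolding indep_rv_def by auto
  let ?A = "Z -` U \<inter> space M"
  have A: "?A \<in> events" using measurable_sets[OF Zmeas U] .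
  obtain R where R: "finite R" "\<And>\<omega>. \<omega>\<in>space M \<Longrightarrow> Y \<omega> \<in> R" using dv_range[OF Y] by blast
  have fac: "prob (?A \<inter> {\<omega>\<in>space M. Y \<omega> = y}) = prob ?A * prob {\<omega>\<in>space M. Y \<omega> = y}" for y
  proof -
    have e: "{\<omega>\<in>space M. Y \<omega> = y} = Y -` {y} \<inter> space M" by auto
    have "prob ({\<omega>\<in>space M. Y \<omega> = y} \<inter> ?A) = prob {\<omega>\<in>space M. Y \<omega> = y} * prob ?A"
      unfolding e by (rule indep_setD[OF iset]) (auto intro!: sigma_sets.Basic U)
    then show ?thesis by (simp add: Int_commute mult.commute)
  qed
  have "integral\<^sup>L M (\<lambda>\<omega>. indicator ?A \<omega> * g (Y \<omega>)) = (\<Sum>y\<in>R. g y * prob (?A \<inter> {\<omega>\<in>space M. Y \<omega> = y}))"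
    using GI[OF R dv_ev[OF Y] A] by simp
  also have "\<dots> = prob ?A * (\<Sum>y\<in>R. g y * prob {\<omega>\<in>space M. Y \<omega> = y})"
    unfolding sum_distrib_left by (rule sum.cong[OF refl]) (simp add: fac)
  also have "(\<Sum>y\<in>R. g y * prob {\<omega>\<in>space M. Y \<omega> = y}) = (\<Sum>y\<in>R. g y * prob (space M \<inter> {\<omega>\<in>space M. Y \<omega> = y}))"
    by (rule sum.cong[OF refl]) (simp add: Int_absorb1)
  also have "\<dots> = integral\<^sup>L M (\<lambda>\<omega>. indicator (space M) \<omega> * g (Y \<omega>))"
    using GI[OF R dv_ev[OF Y] sets.top, of g] by simp
  also have "\<dots> = integral\<^sup>L M (\<lambda>\<omega>. g (Y \<omega>))"
    using integral_space_ind[of "\<lambda>\<omega>. g (Y \<omega>)"] by simp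
  finally show ?thesis .
qed

lemma dist_from_point:
  assumes Z: "\<And>w. prob ({\<omega>\<in>space M. P \<omega>} \<inter> {\<omega>\<in>space M. W \<omega> = w}) = c * prob {\<omega>\<in>space M. W \<omega> = w}"
    and W: "dv W" and P: "{\<omega>\<in>space M. P \<omega>} \<in> events"
  shows "prob {\<omega>\<in>space M. P \<omega> \<and> W \<omega> \<in> A} = c * prob {\<omega>\<in>space M. W \<omega> \<in> A}"
proof -
  obtain R where R: "finite R" "\<And>\<omega>. \<omega>\<in>space M \<Longrightarrow> W \<omega> \<in> R" using dv_range[OF W] by blast
  have e1: "{\<omega>\<in>space M. P \<omega> \<and> W \<omega> \<in> A} \<in> events"
    using P dv_Collect[OF W, of "\<lambda>w. w \<in> A"] by (auto simp: Collect_conj_eq[symmetric] Int_def)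
  have "prob {\<omega>\<in>space M. P \<omega> \<and> W \<omega> \<in> A} = (\<Sum>w\<in>R. prob ({\<omega>\<in>space M. P \<omega> \<and> W \<omega> \<in> A} \<inter> {\<omega>\<in>space M. W \<omega> = w}))"
    by (rule total_prob[OF R dv_ev[OF W] e1])
  also have "\<dots> = (\<Sum>w\<in>R. if w \<in> A then c * prob {\<omega>\<in>space M. W \<omega> = w} else 0)"
  proof (rule sum.cong[OF refl])
    fix w assume "w \<in> R"
    show "prob ({\<omega>\<in>space M. P \<omega> \<and> W \<omega> \<in> A} \<inter> {\<omega>\<in>space M. W \<omega> = w}) = (if w \<in> A then c * prob {\<omega>\<in>space M. W \<omega> = w} else 0)"
    proof (cases "w \<in> A")
      case True
      then have "{\<omega>\<in>space M. P \<omega> \<and> W \<omega> \<in> A} \<inter> {\<omega>\<in>space M. W \<omega> = w} = {\<omega>\<in>space M. P \<omega>} \<inter> {\<omega>\<in>space M. W \<omega> = w}" by auto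
      then show ?thesis using True Z by simp
    next
      case False
      then have "{\<omega>\<in>space M. P \<omega> \<and> W \<omega> \<in> A} \<inter> {\<omega>\<in>space M. W \<omega> = w} = {}" by auto
      then show ?thesis using False by simp
    qed
  qed
  also have "\<dots> = c * (\<Sum>w\<in>R. prob ({\<omega>\<in>space M. W \<omega> \<in> A} \<inter> {\<omega>\<in>space M. W \<omega> = w}))"
    unfolding sum_distrib_left
  proof (rule sum.cong[OF refl])
    fix w show "(if w \<in> A then c * prob {\<omega> \<in> space M. W \<omega> = w} else 0) =
         c * prob ({\<omega> \<in> space M. W \<omega> \<in> A} \<inter> {\<omega> \<in> space M. W \<omega> = w})"
    proof (cases "w \<in> A")
      case True
      then have "{\<omega> \<in> space M. W \<omega> \<in> A} \<inter> {\<omega> \<in> space M. W \<omega> = w} = {\<omega> \<in> space M. W \<omega> = w}" by auto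
      then show ?thesis using True by simp
    next
      case False
      then have "{\<omega> \<in> space M. W \<omega> \<in> A} \<inter> {\<omega> \<in> space M. W \<omega> = w} = {}" by auto
      then show ?thesis using False by simp
    qed
  qed
  also have "(\<Sum>w\<in>R. prob ({\<omega>\<in>space M. W \<omega> \<in> A} \<inter> {\<omega>\<in>space M. W \<omega> = w})) = prob {\<omega>\<in>space M. W \<omega> \<in> A}"
    by (rule total_prob[OF R dv_ev[OF W] dv_Collect[OF W], symmetric])
  finally show ?thesis .
qed

end

lemma cyl_sets:
  assumes "finite J" "J \<subseteq> I"
  shows "{x \<in> space (PiM I (\<lambda>_. count_space UNIV)). \<forall>j\<in>J. x j = t j} \<in> sets (PiM I (\<lambda>_. count_space UNIV))"
proof (rule sets.sets_Collect_finite_All[OF _ assms(1)])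
  fix j assume j: "j \<in> J"
  have "{x \<in> space (PiM I (\<lambda>_. count_space UNIV)). x j = t j} = (\<lambda>x. x j) -` {t j} \<inter> space (PiM I (\<lambda>_. count_space UNIV))" by auto
  also have "\<dots> \<in> sets (PiM I (\<lambda>_. count_space UNIV))"
    using j assms(2) by (intro measurable_sets[OF measurable_component_singleton]) auto
  finally show "{x \<in> space (PiM I (\<lambda>_. count_space UNIV)). x j = t j} \<in> sets (PiM I (\<lambda>_. count_space UNIV))" .
qed

lemma cyl_vimage:
  assumes "J \<subseteq> I"
  shows "(\<lambda>\<omega>. \<lambda>i\<in>I. Y i \<omega>) -` {x \<in> space (PiM I (\<lambda>_. count_space UNIV)). \<forall>j\<in>J. x j = t j} \<inter> space M
     = {\<omega>\<in>space M. \<forall>j\<in>J. Y j \<omega> = t j}"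
  using assms by (auto simp: space_PiM)

context prob_space begin

lemma gen_props:
  assumes dvY: "\<And>i. i \<in> I \<Longrightarrow> dv (Y i)"
    and GY_def: "GY = {{\<omega>\<in>space M. \<forall>j\<in>J. Y j \<omega> = t j} | J t. J \<subseteq> I \<and> finite J} \<union> {{}}"
  shows "Int_stable GY" "GY \<subseteq> events"
    "{(\<lambda>\<omega>. \<lambda>i\<in>I. Y i \<omega>) -` U \<inter> space M | U. U \<in> sets (PiM I (\<lambda>_. count_space UNIV))} \<subseteq> sigma_sets (space M) GY"
proof -
  show "Int_stable GY"
  proof (rule Int_stableI)
    fix a b assume ab: "a \<in> GY" "b \<in> GY"
    show "a \<inter> b \<in> GY"
    proof (cases "a = {} \<or> b = {}")
      case True then show ?thesis unfolding GY_def by auto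
    next
      case False
      obtain J t where a: "a = {\<omega>\<in>space M. \<forall>j\<in>J. Y j \<omega> = t j}" "J \<subseteq> I" "finite J"
        using ab(1) False unfolding GY_def by auto
      obtain J' t' where b: "b = {\<omega>\<in>space M. \<forall>j\<in>J'. Y j \<omega> = t' j}" "J' \<subseteq> I" "finite J'"
        using ab(2) False unfolding GY_def by auto
      show ?thesis
      proof (cases "\<exists>j\<in>J\<inter>J'. t j \<noteq> t' j")
        case True
        then have "a \<inter> b = {}" using a b by auto
        then show ?thesis unfolding GY_def by auto
      next
        case False
        let ?u = "\<lambda>j. if j \<in> J then t j else t' j"
        have "a \<inter> b = {\<omega>\<in>space M. \<forall>j\<in>J \<union> J'. Y j \<omega> = ?u j}" using a b False by auto
        then show ?thesis unfolding GY_def using a b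
          by (intro UnI1 CollectI exI[of _ "J \<union> J'"] exI[of _ ?u]) auto
      qed
    qed
  qed
  show "GY \<subseteq> events"
  proof
    fix a assume "a \<in> GY"
    then consider "a = {}" | J t where "a = {\<omega>\<in>space M. \<forall>j\<in>J. Y j \<omega> = t j}" "J \<subseteq> I" "finite J"
      unfolding GY_def by auto
    then show "a \<in> events"
    proof cases
      case 2 then show ?thesis using ev_all[of J Y t] dvY by auto
    qed simp
  qed
  then have GYsp: "GY \<subseteq> Pow (space M)" using sets.sets_into_space by auto
  let ?N = "sigma (space M) GY"
  have spN: "space ?N = space M" using GYsp by simp
  have setsN: "sets ?N = sigma_sets (space M) GY" using GYsp by simp
  have "(\<lambda>\<omega>. \<lambda>i\<in>I. Y i \<omega>) \<in> ?N \<rightarrow>\<^sub>M PiM I (\<lambda>_. count_space UNIV)"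
  proof (rule measurable_restrict)
    fix i assume i: "i \<in> I"
    show "Y i \<in> ?N \<rightarrow>\<^sub>M count_space UNIV"
    proof (rule measurableI)
      fix A :: "'c set"
      obtain R where R: "finite R" "\<And>\<omega>. \<omega>\<in>space M \<Longrightarrow> Y i \<omega> \<in> R" using dv_range[OF dvY[OF i]] by blast
      have inG: "{\<omega>\<in>space M. Y i \<omega> = s} \<in> GY" for s
      proof -
        have "{\<omega>\<in>space M. Y i \<omega> = s} = {\<omega>\<in>space M. \<forall>j\<in>{i}. Y j \<omega> = (\<lambda>_. s) j}" by auto
        then show ?thesis unfolding GY_def using i
          by (intro UnI1 CollectI exI[of _ "{i}"] exI[of _ "\<lambda>_. s"]) auto
      qed
      have "Y i -` A \<inter> space ?N = \<Union>((\<lambda>s. {\<omega>\<in>space M. Y i \<omega> = s}) ` (R \<inter> A))"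
        using R spN by auto
      also have "\<dots> \<in> sigma_sets (space M) GY"
        using R(1) inG by (intro sigma_sets_UNION) (auto intro!: countable_finite sigma_sets.Basic)
      finally show "Y i -` A \<inter> space ?N \<in> sets ?N" using setsN by simp
    qed auto
  qed
  then show "{(\<lambda>\<omega>. \<lambda>i\<in>I. Y i \<omega>) -` U \<inter> space M | U. U \<in> sets (PiM I (\<lambda>_. count_space UNIV))} \<subseteq> sigma_sets (space M) GY"
  proof (intro subsetI, elim CollectE exE conjE)
    fix x U assume meas: "(\<lambda>\<omega>. \<lambda>i\<in>I. Y i \<omega>) \<in> ?N \<rightarrow>\<^sub>M PiM I (\<lambda>_. count_space UNIV)"
      and x: "x = (\<lambda>\<omega>. \<lambda>i\<in>I. Y i \<omega>) -` U \<inter> space M" and U: "U \<in> sets (PiM I (\<lambda>_. count_space UNIV))"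
    have "(\<lambda>\<omega>. \<lambda>i\<in>I. Y i \<omega>) -` U \<inter> space ?N \<in> sets ?N" by (rule measurable_sets[OF meas U])
    then show "x \<in> sigma_sets (space M) GY" unfolding x spN setsN .
  qed
qed

lemma INDRV:
  assumes dvY: "\<And>i. i \<in> I \<Longrightarrow> dv (Y i)" and dvZ: "\<And>i. i \<in> I' \<Longrightarrow> dv (Z i)"
    and fac: "\<And>J J' t u. J \<subseteq> I \<Longrightarrow> finite J \<Longrightarrow> J' \<subseteq> I' \<Longrightarrow> finite J' \<Longrightarrow>
      prob {\<omega>\<in>space M. (\<forall>j\<in>J. Y j \<omega> = t j) \<and> (\<forall>j\<in>J'. Z j \<omega> = u j)} =
      prob {\<omega>\<in>space M. \<forall>j\<in>J. Y j \<omega> = t j} * prob {\<omega>\<in>space M. \<forall>j\<in>J'. Z j \<omega> = u j}"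
  shows "indep_rv M (PiM I (\<lambda>_. count_space UNIV)) (\<lambda>\<omega>. \<lambda>i\<in>I. Y i \<omega>) (PiM I' (\<lambda>_. count_space UNIV)) (\<lambda>\<omega>. \<lambda>i\<in>I'. Z i \<omega>)"
proof -
  define GY where "GY = {{\<omega>\<in>space M. \<forall>j\<in>J. Y j \<omega> = t j} | J t. J \<subseteq> I \<and> finite J} \<union> {{}}"
  define GZ where "GZ = {{\<omega>\<in>space M. \<forall>j\<in>J. Z j \<omega> = t j} | J t. J \<subseteq> I' \<and> finite J} \<union> {{}}"
  note pY = gen_props[OF dvY GY_def]
  note pZ = gen_props[OF dvZ GZ_def]
  have "indep_set GY GZ"
  proof (rule indep_setI[OF pY(2) pZ(2)])
    fix a b assume a: "a \<in> GY" and b: "b \<in> GZ"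
    show "prob (a \<inter> b) = prob a * prob b"
    proof (cases "a = {} \<or> b = {}")
      case True then show ?thesis by auto
    next
      case False
      obtain J t where a: "a = {\<omega>\<in>space M. \<forall>j\<in>J. Y j \<omega> = t j}" "J \<subseteq> I" "finite J"
        using a False unfolding GY_def by auto
      obtain J' u where b: "b = {\<omega>\<in>space M. \<forall>j\<in>J'. Z j \<omega> = u j}" "J' \<subseteq> I'" "finite J'"
        using b False unfolding GZ_def by auto
      have "a \<inter> b = {\<omega>\<in>space M. (\<forall>j\<in>J. Y j \<omega> = t j) \<and> (\<forall>j\<in>J'. Z j \<omega> = u j)}" using a b by auto
      then show ?thesis using fac[OF a(2,3) b(2,3), of t u] a b by simp
    qed
  qed
  then have "indep_set (sigma_sets (space M) GY) (sigma_sets (space M) GZ)"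
    by (rule indep_set_sigma_sets[OF _ pY(1) pZ(1)])
  then have "indep_set (sigma_sets (space M) {(\<lambda>\<omega>. \<lambda>i\<in>I. Y i \<omega>) -` U \<inter> space M | U. U \<in> sets (PiM I (\<lambda>_. count_space UNIV))})
     (sigma_sets (space M) {(\<lambda>\<omega>. \<lambda>i\<in>I'. Z i \<omega>) -` U \<inter> space M | U. U \<in> sets (PiM I' (\<lambda>_. count_space UNIV))})"
    unfolding indep_set_def
  proof (rule indep_sets_mono_sets)
    fix i :: bool
    show "(case i of True \<Rightarrow> sigma_sets (space M) {(\<lambda>\<omega>. \<lambda>i\<in>I. Y i \<omega>) -` U \<inter> space M | U. U \<in> sets (PiM I (\<lambda>_. count_space UNIV))}
       | False \<Rightarrow> sigma_sets (space M) {(\<lambda>\<omega>. \<lambda>i\<in>I'. Z i \<omega>) -` U \<inter> space M | U. U \<in> sets (PiM I' (\<lambda>_. count_space UNIV))})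
      \<subseteq> (case i of True \<Rightarrow> sigma_sets (space M) GY | False \<Rightarrow> sigma_sets (space M) GZ)"
      using sigma_sets_mono[OF pY(3)] sigma_sets_mono[OF pZ(3)] by (cases i) simp_all
  qed
  moreover have "(\<lambda>\<omega>. \<lambda>i\<in>I. Y i \<omega>) \<in> M \<rightarrow>\<^sub>M PiM I (\<lambda>_. count_space UNIV)"
    using dv_meas[OF dvY] by (rule measurable_restrict)
  moreover have "(\<lambda>\<omega>. \<lambda>i\<in>I'. Z i \<omega>) \<in> M \<rightarrow>\<^sub>M PiM I' (\<lambda>_. count_space UNIV)"
    using dv_meas[OF dvZ] by (rule measurable_restrict)
  ultimately show ?thesis unfolding indep_rv_def by auto
qed

lemma INDV:
  assumes dvY: "\<And>i. i \<in> I \<Longrightarrow> dv (Y i)"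
    and fac: "\<And>J t. J \<subseteq> I \<Longrightarrow> finite J \<Longrightarrow> J \<noteq> {} \<Longrightarrow>
        prob {\<omega>\<in>space M. \<forall>j\<in>J. Y j \<omega> = t j} = (\<Prod>j\<in>J. prob {\<omega>\<in>space M. Y j \<omega> = t j})"
  shows "indep_vars (\<lambda>_. count_space UNIV) Y I"
proof -
  define G where "G \<equiv> \<lambda>i. {{\<omega>\<in>space M. Y i \<omega> = t} | t. True} \<union> {{}}"
  have G_ev: "G i \<subseteq> events" if "i\<in>I" for i using dv_ev[OF dvY[OF that]] unfolding G_def by auto
  have indG: "indep_sets G I"
  proof (rule indep_setsI)
    fix A J assume J: "J \<noteq> {}" "J \<subseteq> I" "finite J" and A: "\<forall>j\<in>J. A j \<in> G j"
    show "prob (\<Inter>j\<in>J. A j) = (\<Prod>j\<in>J. prob (A j))"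
    proof (cases "\<exists>j\<in>J. A j = {}")
      case True
      then obtain j where j: "j \<in> J" "A j = {}" by blast
      then have "(\<Inter>j\<in>J. A j) = {}" by auto
      moreover have "(\<Prod>j\<in>J. prob (A j)) = 0" using j J(3) by (intro prod_zero bexI[of _ j]) auto
      ultimately show ?thesis by simp
    next
      case False
      then have "\<forall>j\<in>J. \<exists>t. A j = {\<omega>\<in>space M. Y j \<omega> = t}" using A unfolding G_def by auto
      then obtain t where t: "\<And>j. j\<in>J \<Longrightarrow> A j = {\<omega>\<in>space M. Y j \<omega> = t j}" by metis
      have "(\<Inter>j\<in>J. A j) = {\<omega>\<in>space M. \<forall>j\<in>J. Y j \<omega> = t j}" using t J(1) by auto
      then show ?thesis using fac[OF J(2,3,1), of t] t by simp
    qed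
  qed (rule G_ev)
  have stable: "Int_stable (G i)" for i
  proof (rule Int_stableI)
    fix a b assume ab: "a \<in> G i" "b \<in> G i"
    show "a \<inter> b \<in> G i"
    proof (cases "a = {} \<or> b = {}")
      case True then show ?thesis unfolding G_def by auto
    next
      case False
      obtain t where "a = {\<omega>\<in>space M. Y i \<omega> = t}" using ab(1) False unfolding G_def by auto
      moreover obtain t' where "b = {\<omega>\<in>space M. Y i \<omega> = t'}" using ab(2) False unfolding G_def by auto
      ultimately show ?thesis unfolding G_def by (cases "t = t'") auto
    qed
  qed
  have indS: "indep_sets (\<lambda>i. sigma_sets (space M) (G i)) I" by (rule indep_sets_sigma[OF indG stable])
  have sub: "sigma_sets (space M) {Y i -` A \<inter> space M | A. A \<in> sets (count_space UNIV)} \<subseteq> sigma_sets (space M) (G i)" if i: "i \<in> I" for i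
  proof (rule sigma_sets_mono, safe)
    fix A :: "'c set"
    obtain R where R: "finite R" "\<And>\<omega>. \<omega>\<in>space M \<Longrightarrow> Y i \<omega> \<in> R" using dv_range[OF dvY[OF i]] by blast
    have "Y i -` A \<inter> space M = \<Union>((\<lambda>t. {\<omega>\<in>space M. Y i \<omega> = t}) ` (R \<inter> A))" using R by auto
    also have "\<dots> \<in> sigma_sets (space M) (G i)" using R(1)
      by (intro sigma_sets_UNION) (auto intro!: countable_finite sigma_sets.Basic simp: G_def)
    finally show "Y i -` A \<inter> space M \<in> sigma_sets (space M) (G i)" .
  qed
  show ?thesis unfolding indep_vars_def
    using indS sub dv_meas[OF dvY] by (auto intro: indep_sets_mono_sets)
qed

end

context prob_space begin

lemma vimage_in_sigma: "U \<in> sets N \<Longrightarrow> f -` U \<inter> space M \<in> sigma_sets (space M) {f -` U \<inter> space M | U. U \<in> sets N}"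
  by (rule sigma_sets.Basic) blast

lemma indep_rv_cyl:
  assumes ind: "indep_rv M (PiM I (\<lambda>_. count_space UNIV)) (\<lambda>\<omega>. \<lambda>i\<in>I. Y i \<omega>) (PiM I' (\<lambda>_. count_space UNIV)) (\<lambda>\<omega>. \<lambda>i\<in>I'. Z i \<omega>)"
    and J: "finite J" "J \<subseteq> I" and J': "finite J'" "J' \<subseteq> I'"
  shows "prob ({\<omega>\<in>space M. \<forall>j\<in>J. Y j \<omega> = t j} \<inter> {\<omega>\<in>space M. \<forall>j\<in>J'. Z j \<omega> = u j}) =
    prob {\<omega>\<in>space M. \<forall>j\<in>J. Y j \<omega> = t j} * prob {\<omega>\<in>space M. \<forall>j\<in>J'. Z j \<omega> = u j}"
proof -
  define cY where "cY = {x \<in> space (PiM I (\<lambda>_. count_space UNIV)). \<forall>j\<in>J. x j = t j}"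
  define cZ where "cZ = {x \<in> space (PiM I' (\<lambda>_. count_space UNIV)). \<forall>j\<in>J'. x j = u j}"
  have iset: "indep_set (sigma_sets (space M) {(\<lambda>\<omega>. \<lambda>i\<in>I. Y i \<omega>) -` U \<inter> space M | U. U \<in> sets (PiM I (\<lambda>_. count_space UNIV))})
     (sigma_sets (space M) {(\<lambda>\<omega>. \<lambda>i\<in>I'. Z i \<omega>) -` U \<inter> space M | U. U \<in> sets (PiM I' (\<lambda>_. count_space UNIV))})"
    using ind unfolding indep_rv_def by auto
  have eY: "(\<lambda>\<omega>. \<lambda>i\<in>I. Y i \<omega>) -` cY \<inter> space M = {\<omega>\<in>space M. \<forall>j\<in>J. Y j \<omega> = t j}"
    unfolding cY_def by (rule cyl_vimage[OF J(2)])
  have eZ: "(\<lambda>\<omega>. \<lambda>i\<in>I'. Z i \<omega>) -` cZ \<inter> space M = {\<omega>\<in>space M. \<forall>j\<in>J'. Z j \<omega> = u j}"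
    unfolding cZ_def by (rule cyl_vimage[OF J'(2)])
  have cYs: "cY \<in> sets (PiM I (\<lambda>_. count_space UNIV))" unfolding cY_def by (rule cyl_sets[OF J])
  have cZs: "cZ \<in> sets (PiM I' (\<lambda>_. count_space UNIV))" unfolding cZ_def by (rule cyl_sets[OF J'])
  have "prob (((\<lambda>\<omega>. \<lambda>i\<in>I. Y i \<omega>) -` cY \<inter> space M) \<inter> ((\<lambda>\<omega>. \<lambda>i\<in>I'. Z i \<omega>) -` cZ \<inter> space M)) =
     prob ((\<lambda>\<omega>. \<lambda>i\<in>I. Y i \<omega>) -` cY \<inter> space M) * prob ((\<lambda>\<omega>. \<lambda>i\<in>I'. Z i \<omega>) -` cZ \<inter> space M)"
    by (rule indep_setD[OF iset vimage_in_sigma[OF cYs] vimage_in_sigma[OF cZs]])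
  then show ?thesis unfolding eY eZ .
qed

lemma indep_rv_cyl2:
  assumes ind: "indep_rv M (count_space UNIV) K (PiM I' (\<lambda>_. count_space UNIV)) (\<lambda>\<omega>. \<lambda>i\<in>I'. Z i \<omega>)"
    and K: "dv K" and J': "finite J'" "J' \<subseteq> I'"
  shows "integral\<^sup>L M (\<lambda>\<omega>. indicator {\<omega>\<in>space M. \<forall>j\<in>J'. Z j \<omega> = u j} \<omega> * g (K \<omega>)) =
    prob {\<omega>\<in>space M. \<forall>j\<in>J'. Z j \<omega> = u j} * integral\<^sup>L M (\<lambda>\<omega>. g (K \<omega>))"
proof -
  define cZ where "cZ = {x \<in> space (PiM I' (\<lambda>_. count_space UNIV)). \<forall>j\<in>J'. x j = u j}"
  have eZ: "(\<lambda>\<omega>. \<lambda>i\<in>I'. Z i \<omega>) -` cZ \<inter> space M = {\<omega>\<in>space M. \<forall>j\<in>J'. Z j \<omega> = u j}"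
    unfolding cZ_def by (rule cyl_vimage[OF J'(2)])
  have cZs: "cZ \<in> sets (PiM I' (\<lambda>_. count_space UNIV))" unfolding cZ_def by (rule cyl_sets[OF J'])
  show ?thesis using IND[OF ind K cZs, of g] unfolding eZ .
qed

end

definition vl :: "(nat \<Rightarrow> nat) \<Rightarrow> nat \<Rightarrow> edge set \<Rightarrow> bool" where
  "vl X n l \<longleftrightarrow> l \<subseteq> Vg X n \<times> Vg X (Suc n) \<and> (\<forall>w\<in>Vg X (Suc n). \<exists>!v. v \<in> Vg X n \<and> (v, w) \<in> l)"

lemma Vg_fin[simp]: "finite (Vg X n)" by (simp add: Vg_def)
lemma Vg_fst: "v \<in> Vg X n \<Longrightarrow> fst v = n" by (auto simp: Vg_def)
lemma Vg_mem: "(m, i) \<in> Vg X n \<longleftrightarrow> m = n \<and> i \<in> {1..X n}" by (auto simp: Vg_def)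

lemma enat_Suc_lt: assumes "enat (Suc n) < \<tau>" shows "enat n < \<tau>"
proof -
  have "enat n < enat (Suc n)" by simp
  then show ?thesis using assms by (rule less_trans)
qed

locale gset =
  fixes M :: "'w measure" and \<tau> :: enat and X :: "nat \<Rightarrow> nat" and k :: "nat \<Rightarrow> nat \<Rightarrow> nat"
    and E :: "'w \<Rightarrow> edge set" and \<sigma> :: "'w \<Rightarrow> vert \<Rightarrow> vert"
  assumes PSp: "prob_space M" and gd: "genealogy_data \<tau> X k" and gm: "genealogy_model M \<tau> X k E"
    and up: "uniform_P M \<tau> X \<sigma>"
    and ind: "indep_rv M (PiM {n. enat n < \<tau>} (\<lambda>_. count_space UNIV)) (\<lambda>\<omega>. \<lambda>n\<in>{n. enat n < \<tau>}. sig X \<sigma> n \<omega>)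
           (PiM {n. enat (Suc n) < \<tau>} (\<lambda>_. count_space UNIV)) (\<lambda>\<omega>. \<lambda>n\<in>{n. enat (Suc n) < \<tau>}. layer X (E \<omega>) n)"
begin

sublocale prob_space M by (rule PSp)

abbreviation S where "S n \<omega> \<equiv> sig X \<sigma> n \<omega>"
abbreviation L where "L n \<omega> \<equiv> layer X (E \<omega>) n"
abbreviation T where "T n \<omega> \<equiv> sig_layer X \<sigma> E n \<omega>"

definition PS :: "nat \<Rightarrow> (vert \<Rightarrow> vert) set" where "PS n = {p. p permutes Vg X n}"
definition LR :: "nat \<Rightarrow> edge set set" where "LR n = Pow (Vg X n \<times> Vg X (Suc n))"

lemma PS_fin[simp]: "finite (PS n)" unfolding PS_def by (rule finite_permutations) simp
lemma PS_ne: "PS n \<noteq> {}" unfolding PS_def using permutes_id by blast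
lemma PS_card: "card (PS n) > 0" using PS_fin PS_ne by (simp add: card_gt_0_iff)
lemma LR_fin[simp]: "finite (LR n)" unfolding LR_def by simp

lemma sigma_props: "\<omega> \<in> space M \<Longrightarrow> \<sigma> \<omega> permutes Vall \<tau> X"
  "\<omega> \<in> space M \<Longrightarrow> enat n < \<tau> \<Longrightarrow> \<sigma> \<omega> ` Vg X n = Vg X n"
  using up unfolding uniform_P_def by blast+

lemma S_perm: assumes w: "\<omega> \<in> space M" and n: "enat n < \<tau>" shows "S n \<omega> permutes Vg X n"
proof (rule bij_imp_permutes)
  have inj: "inj (\<sigma> \<omega>)" using permutes_inj[OF sigma_props(1)[OF w]] .
  show "bij_betw (S n \<omega>) (Vg X n) (Vg X n)"
    unfolding bij_betw_def
  proof
    show "inj_on (S n \<omega>) (Vg X n)" using inj unfolding sig_def by (auto simp: inj_on_def inj_def)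
    have "S n \<omega> ` Vg X n = \<sigma> \<omega> ` Vg X n" unfolding sig_def by auto
    then show "S n \<omega> ` Vg X n = Vg X n" using sigma_props(2)[OF w n] by simp
  qed
qed (auto simp: sig_def)

lemma S_PS: "\<omega> \<in> space M \<Longrightarrow> enat n < \<tau> \<Longrightarrow> S n \<omega> \<in> PS n"
  using S_perm by (simp add: PS_def)

lemma indep_S: "indep_vars (\<lambda>_. count_space UNIV) (sig X \<sigma>) {n. enat n < \<tau>}"
  using up unfolding uniform_P_def by auto

lemma dv_S: assumes "enat n < \<tau>" shows "dv (S n)"
proof -
  have "random_variable (count_space UNIV) (S n)" using indep_S assms unfolding indep_vars_def2 by auto
  then show ?thesis using S_PS assms by (intro dv_of_meas[of _ "PS n"]) auto
qed

lemma gen: "\<omega> \<in> space M \<Longrightarrow> genealogy \<tau> X k (E \<omega>)"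
  using gm unfolding genealogy_model_def by auto

lemma L_LR: "L n \<omega> \<in> LR n" unfolding LR_def layer_def by auto

lemma dv_L: assumes "enat (Suc n) < \<tau>" shows "dv (L n)"
proof -
  have "random_variable (count_space UNIV) (L n)" using gm assms unfolding genealogy_model_def by auto
  then show ?thesis using L_LR by (intro dv_of_meas[of _ "LR n"]) auto
qed

lemma T_def': "T n \<omega> = map_prod (S n \<omega>) (S (Suc n) \<omega>) ` L n \<omega>" by (simp add: sig_layer_def)

lemma dv_T: assumes "enat (Suc n) < \<tau>" shows "dv (T n)"
proof -
  have "dv (\<lambda>\<omega>. (S n \<omega>, S (Suc n) \<omega>, L n \<omega>))"
    using assms enat_Suc_lt[OF assms] by (intro dv_pair dv_S dv_L) auto
  then have "dv (\<lambda>\<omega>. (\<lambda>(a, b, c). map_prod a b ` c) (S n \<omega>, S (Suc n) \<omega>, L n \<omega>))" by (rule dv_comp)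
  then show ?thesis by (simp add: sig_layer_def)
qed

lemma prob_S: assumes n: "enat n < \<tau>"
  shows "prob {\<omega>\<in>space M. S n \<omega> = q} = (if q \<in> PS n then 1 / real (card (PS n)) else 0)"
proof -
  have d: "distr M (count_space UNIV) (S n) = measure_pmf (pmf_of_set (PS n))"
    using up n unfolding uniform_P_def PS_def by auto
  have "prob {\<omega>\<in>space M. S n \<omega> = q} = measure (distr M (count_space UNIV) (S n)) {q}"
    using dv_meas[OF dv_S[OF n]] by (subst measure_distr) (auto intro: arg_cong[where f=prob])
  also have "\<dots> = pmf (pmf_of_set (PS n)) q" unfolding d by (simp add: measure_pmf_single)
  also have "\<dots> = (if q \<in> PS n then 1 / real (card (PS n)) else 0)" using PS_ne by (simp add: indicator_def)
  finally show ?thesis .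
qed

lemma H1:
  assumes F: "finite F" "F \<subseteq> {n. enat (Suc n) < \<tau>}" and G: "finite G" "G \<subseteq> {n. enat n < \<tau>}"
  shows "prob {\<omega>\<in>space M. (\<forall>m\<in>F. L m \<omega> = l m) \<and> (\<forall>m\<in>G. S m \<omega> = s m)} =
    prob {\<omega>\<in>space M. \<forall>m\<in>F. L m \<omega> = l m} * (\<Prod>m\<in>G. prob {\<omega>\<in>space M. S m \<omega> = s m})"
proof -
  let ?I = "{n. enat n < \<tau>}" and ?I' = "{n. enat (Suc n) < \<tau>}"
  have "prob ({\<omega>\<in>space M. \<forall>m\<in>G. S m \<omega> = s m} \<inter> {\<omega>\<in>space M. \<forall>m\<in>F. L m \<omega> = l m}) =
      prob {\<omega>\<in>space M. \<forall>m\<in>G. S m \<omega> = s m} * prob {\<omega>\<in>space M. \<forall>m\<in>F. L m \<omega> = l m}"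
    by (rule indep_rv_cyl[OF ind G F])
  moreover have "prob {\<omega>\<in>space M. \<forall>m\<in>G. S m \<omega> = s m} = (\<Prod>m\<in>G. prob {\<omega>\<in>space M. S m \<omega> = s m})"
  proof (cases "G = {}")
    case True then show ?thesis by (simp add: prob_space)
  next
    case False
    have "prob (\<Inter>m\<in>G. sig X \<sigma> m -` {s m} \<inter> space M) = (\<Prod>m\<in>G. prob (sig X \<sigma> m -` {s m} \<inter> space M))"
      by (rule indep_varsD[OF indep_S False G(1) G(2)]) auto
    moreover have "(\<Inter>m\<in>G. sig X \<sigma> m -` {s m} \<inter> space M) = {\<omega>\<in>space M. \<forall>m\<in>G. S m \<omega> = s m}" using False by auto
    moreover have "\<And>m. sig X \<sigma> m -` {s m} \<inter> space M = {\<omega>\<in>space M. S m \<omega> = s m}" by auto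
    ultimately show ?thesis by simp
  qed
  moreover have "{\<omega>\<in>space M. \<forall>m\<in>G. S m \<omega> = s m} \<inter> {\<omega>\<in>space M. \<forall>m\<in>F. L m \<omega> = l m} =
     {\<omega>\<in>space M. (\<forall>m\<in>F. L m \<omega> = l m) \<and> (\<forall>m\<in>G. S m \<omega> = s m)}" by auto
  ultimately show ?thesis by (simp add: mult.commute)
qed

lemma E_sub: "\<omega> \<in> space M \<Longrightarrow> E \<omega> \<subseteq> (\<Union>n\<in>{n. enat (Suc n) < \<tau>}. Vg X n \<times> Vg X (Suc n))"
  using gen unfolding genealogy_def by auto

lemma L_vl: assumes w: "\<omega> \<in> space M" and n: "enat (Suc n) < \<tau>" shows "vl X n (L n \<omega>)"
proof -
  have h: "\<forall>w\<in>Vg X (Suc n). \<exists>!v. v \<in> Vg X n \<and> (v, w) \<in> E \<omega>" using gen[OF w] n unfolding genealogy_def by blast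
  show ?thesis unfolding vl_def
  proof (intro conjI ballI)
    show "L n \<omega> \<subseteq> Vg X n \<times> Vg X (Suc n)" by (auto simp: layer_def)
    fix u assume wv: "u \<in> Vg X (Suc n)"
    have "(\<lambda>v. v \<in> Vg X n \<and> (v, u) \<in> L n \<omega>) = (\<lambda>v. v \<in> Vg X n \<and> (v, u) \<in> E \<omega>)"
      using wv by (auto simp: layer_def fun_eq_iff)
    then show "\<exists>!v. v \<in> Vg X n \<and> (v, u) \<in> L n \<omega>" using h wv by simp
  qed
qed

lemma od_layer: assumes w: "\<omega> \<in> space M" and v: "v \<in> Vg X n"
  shows "od (E \<omega>) v = od (L n \<omega>) v"
proof -
  have "{u. (v, u) \<in> E \<omega>} = {u. (v, u) \<in> L n \<omega>}"
  proof (intro Collect_cong iffI)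
    fix u assume "(v, u) \<in> E \<omega>"
    then obtain m where "v \<in> Vg X m" "u \<in> Vg X (Suc m)" using E_sub[OF w] by blast
    then show "(v, u) \<in> L n \<omega>" using v \<open>(v, u) \<in> E \<omega>\<close> Vg_fst[of v X m] Vg_fst[of v X n] by (auto simp: layer_def)
  qed (auto simp: layer_def)
  then show ?thesis unfolding od_def by simp
qed

definition kv :: "nat \<Rightarrow> edge set \<Rightarrow> nat \<Rightarrow> nat" where "kv n l = (\<lambda>i\<in>{1..X n}. od l (n, i))"

lemma Kvec_kv: "\<omega> \<in> space M \<Longrightarrow> Kvec X (E \<omega>) n = kv n (L n \<omega>)"
  unfolding Kvec_def kv_def by (intro restrict_ext od_layer) (auto simp: Vg_def)

lemma Xi_layer: "Xi X (E \<omega>) n = Xi X (L n \<omega>) n"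
  unfolding Xi_def layer_def by auto

lemma layer_perm: assumes w: "\<omega> \<in> space M" and n: "enat (Suc n) < \<tau>"
  shows "layer X (perm_edges (\<sigma> \<omega>) (E \<omega>)) n = T n \<omega>"
proof -
  have n0: "enat n < \<tau>" using enat_Suc_lt[OF n] .
  have pres: "\<And>m v. enat m < \<tau> \<Longrightarrow> v \<in> Vg X m \<Longrightarrow> \<sigma> \<omega> v \<in> Vg X m" using sigma_props(2)[OF w] by blast
  show ?thesis unfolding T_def' layer_def perm_edges_def
  proof (intro set_eqI iffI)
    fix x assume "x \<in> map_prod (\<sigma> \<omega>) (\<sigma> \<omega>) ` E \<omega> \<inter> Vg X n \<times> Vg X (Suc n)"
    then obtain v u where x: "x = (\<sigma> \<omega> v, \<sigma> \<omega> u)" "(v, u) \<in> E \<omega>" "\<sigma> \<omega> v \<in> Vg X n" "\<sigma> \<omega> u \<in> Vg X (Suc n)" by auto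
    then obtain m where m: "enat (Suc m) < \<tau>" "v \<in> Vg X m" "u \<in> Vg X (Suc m)" using E_sub[OF w] by blast
    have "\<sigma> \<omega> v \<in> Vg X m" using pres[OF enat_Suc_lt[OF m(1)] m(2)] .
    then have "m = n" using x(3) Vg_fst by metis
    have vu: "(v, u) \<in> E \<omega> \<inter> Vg X n \<times> Vg X (Suc n)" using x m \<open>m = n\<close> by simp
    have "x = map_prod (S n \<omega>) (S (Suc n) \<omega>) (v, u)" using x m \<open>m = n\<close> by (simp add: sig_def)
    then show "x \<in> map_prod (S n \<omega>) (S (Suc n) \<omega>) ` (E \<omega> \<inter> Vg X n \<times> Vg X (Suc n))"
      by (rule rev_image_eqI[OF vu])
  next
    fix x assume "x \<in> map_prod (S n \<omega>) (S (Suc n) \<omega>) ` (E \<omega> \<inter> Vg X n \<times> Vg X (Suc n))"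
    then obtain v u where x: "x = (S n \<omega> v, S (Suc n) \<omega> u)" "(v, u) \<in> E \<omega>" "v \<in> Vg X n" "u \<in> Vg X (Suc n)" by auto
    have xe: "x = map_prod (\<sigma> \<omega>) (\<sigma> \<omega>) (v, u)" using x by (simp add: sig_def)
    have "x \<in> map_prod (\<sigma> \<omega>) (\<sigma> \<omega>) ` E \<omega>" by (rule image_eqI[where f="map_prod (\<sigma> \<omega>) (\<sigma> \<omega>)" and x="(v, u)", OF xe x(2)])
    moreover have "x \<in> Vg X n \<times> Vg X (Suc n)" using xe pres[OF n0 x(3)] pres[OF n x(4)] by simp
    ultimately show "x \<in> map_prod (\<sigma> \<omega>) (\<sigma> \<omega>) ` E \<omega> \<inter> Vg X n \<times> Vg X (Suc n)" by simp
  qed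
qed

end

lemma fibre_perm:
  assumes fin: "finite A" and f1: "f1 ` A \<subseteq> B" and f2: "f2 ` A \<subseteq> B"
    and cd: "\<And>b. b \<in> B \<Longrightarrow> card {a\<in>A. f1 a = b} = card {a\<in>A. f2 a = b}"
  shows "\<exists>\<rho>. \<rho> permutes A \<and> (\<forall>a\<in>A. f2 (\<rho> a) = f1 a)"
proof -
  have "\<forall>b\<in>B. \<exists>h. bij_betw h {a\<in>A. f1 a = b} {a\<in>A. f2 a = b}"
    using cd fin by (auto intro!: finite_same_card_bij)
  then obtain g where g: "\<And>b. b \<in> B \<Longrightarrow> bij_betw (g b) {a\<in>A. f1 a = b} {a\<in>A. f2 a = b}" by metis
  define \<rho> where "\<rho> a = (if a \<in> A then g (f1 a) a else a)" for a
  have into: "\<rho> a \<in> A \<and> f2 (\<rho> a) = f1 a" if a: "a \<in> A" for a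
  proof -
    have "f1 a \<in> B" using a f1 by auto
    then have "g (f1 a) a \<in> {x\<in>A. f2 x = f1 a}" using g[of "f1 a"] a unfolding bij_betw_def by auto
    then show ?thesis using a unfolding \<rho>_def by auto
  qed
  have inj: "inj_on \<rho> A"
  proof (rule inj_onI)
    fix a a' assume a: "a \<in> A" "a' \<in> A" "\<rho> a = \<rho> a'"
    then have eq: "f1 a = f1 a'" using into by metis
    have b: "f1 a \<in> B" using a f1 by auto
    have "g (f1 a) a = g (f1 a) a'" using a eq unfolding \<rho>_def by auto
    moreover have "inj_on (g (f1 a)) {x\<in>A. f1 x = f1 a}" using g[OF b] unfolding bij_betw_def by auto
    ultimately show "a = a'" using a eq by (auto dest: inj_onD)
  qed
  have "\<rho> ` A = A" using endo_inj_surj[OF fin _ inj] into by auto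
  then have "bij_betw \<rho> A A" using inj unfolding bij_betw_def by auto
  then have "\<rho> permutes A" by (rule bij_imp_permutes) (simp add: \<rho>_def)
  then show ?thesis using into by blast
qed

lemma partition_perm:
  assumes finB: "finite B" and f1: "f1 ` A \<subseteq> B" and f2: "f2 ` A \<subseteq> B"
    and eq: "\<And>a a'. a \<in> A \<Longrightarrow> a' \<in> A \<Longrightarrow> f1 a = f1 a' \<longleftrightarrow> f2 a = f2 a'"
  shows "\<exists>\<rho>. \<rho> permutes B \<and> (\<forall>a\<in>A. \<rho> (f1 a) = f2 a)"
proof -
  define h where "h b = f2 (SOME a. a \<in> A \<and> f1 a = b)" for b
  have hf: "h (f1 a) = f2 a" if a: "a \<in> A" for a
  proof -
    have "\<exists>x. x \<in> A \<and> f1 x = f1 a" using a by blast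
    then have "(SOME x. x \<in> A \<and> f1 x = f1 a) \<in> A \<and> f1 (SOME x. x \<in> A \<and> f1 x = f1 a) = f1 a" by (rule someI_ex)
    then show ?thesis unfolding h_def using eq a by blast
  qed
  have hinj: "inj_on h (f1 ` A)"
  proof (rule inj_onI)
    fix x y assume "x \<in> f1 ` A" "y \<in> f1 ` A" "h x = h y"
    then obtain a a' where "a \<in> A" "a' \<in> A" "x = f1 a" "y = f1 a'" "h (f1 a) = h (f1 a')" by blast
    then show "x = y" using hf eq by metis
  qed
  have himg: "h ` (f1 ` A) = f2 ` A" using hf by (auto simp: image_iff)
  have finA1: "finite (f1 ` A)" using finB f1 by (rule finite_subset[rotated])
  have finA2: "finite (f2 ` A)" using finB f2 by (rule finite_subset[rotated])
  have "card (f1 ` A) = card (f2 ` A)" using card_image[OF hinj] himg by simp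
  then have "card (B - f1 ` A) = card (B - f2 ` A)"
    using f1 f2 finB by (simp add: card_Diff_subset finA1 finA2)
  then obtain g where g: "bij_betw g (B - f1 ` A) (B - f2 ` A)"
    using finB finite_same_card_bij by (metis finite_Diff)
  define \<rho> where "\<rho> b = (if b \<in> f1 ` A then h b else if b \<in> B then g b else b)" for b
  have into: "\<rho> ` B \<subseteq> B"
  proof
    fix y assume "y \<in> \<rho> ` B"
    then obtain b where b: "b \<in> B" "y = \<rho> b" by blast
    show "y \<in> B"
    proof (cases "b \<in> f1 ` A")
      case True then have "h b \<in> f2 ` A" using himg by blast
      then show ?thesis using b True f2 unfolding \<rho>_def by auto
    next
      case False then have "g b \<in> B - f2 ` A" using g b unfolding bij_betw_def by auto
      then show ?thesis using b False unfolding \<rho>_def by auto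
    qed
  qed
  have inj: "inj_on \<rho> B"
  proof (rule inj_onI)
    fix x y assume x: "x \<in> B" and y: "y \<in> B" and e: "\<rho> x = \<rho> y"
    have gi: "inj_on g (B - f1 ` A)" using g unfolding bij_betw_def by auto
    have gx: "x \<notin> f1 ` A \<Longrightarrow> g x \<in> B - f2 ` A" using g x unfolding bij_betw_def by auto
    have gy: "y \<notin> f1 ` A \<Longrightarrow> g y \<in> B - f2 ` A" using g y unfolding bij_betw_def by auto
    have hx: "x \<in> f1 ` A \<Longrightarrow> h x \<in> f2 ` A" using himg by blast
    have hy: "y \<in> f1 ` A \<Longrightarrow> h y \<in> f2 ` A" using himg by blast
    show "x = y"
    proof (cases "x \<in> f1 ` A"; cases "y \<in> f1 ` A")
      assume "x \<in> f1 ` A" "y \<in> f1 ` A" then show ?thesis using e hinj unfolding \<rho>_def by (auto dest: inj_onD)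
    next
      assume "x \<in> f1 ` A" "y \<notin> f1 ` A" then show ?thesis using e hx gy y unfolding \<rho>_def by auto
    next
      assume "x \<notin> f1 ` A" "y \<in> f1 ` A" then show ?thesis using e gx hy x unfolding \<rho>_def by auto
    next
      assume "x \<notin> f1 ` A" "y \<notin> f1 ` A" then show ?thesis using e gi x y unfolding \<rho>_def by (auto dest: inj_onD)
    qed
  qed
  have "\<rho> ` B = B" using endo_inj_surj[OF finB into inj] .
  then have "bij_betw \<rho> B B" using inj unfolding bij_betw_def by auto
  then have "\<rho> permutes B" by (rule bij_imp_permutes) (use f1 in \<open>auto simp: \<rho>_def\<close>)
  moreover have "\<forall>a\<in>A. \<rho> (f1 a) = f2 a" using hf unfolding \<rho>_def by auto
  ultimately show ?thesis by blast
qed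

lemma card_perm_comp:
  assumes r: "\<rho> permutes A"
  shows "card {p. p permutes A \<and> P (p \<circ> \<rho>)} = card {p. p permutes A \<and> P p}"
proof (rule bij_betw_same_card[of "\<lambda>p. p \<circ> \<rho>"])
  have ri: "inv \<rho> permutes A" using permutes_inv[OF r] .
  show "bij_betw (\<lambda>p. p \<circ> \<rho>) {p. p permutes A \<and> P (p \<circ> \<rho>)} {p. p permutes A \<and> P p}"
  proof (rule bij_betw_byWitness[where f'="\<lambda>p. p \<circ> inv \<rho>"])
    show "\<forall>a\<in>{p. p permutes A \<and> P (p \<circ> \<rho>)}. a \<circ> \<rho> \<circ> inv \<rho> = a"
      using permutes_inverses(1)[OF r] by (auto simp: fun_eq_iff)
    show "\<forall>a'\<in>{p. p permutes A \<and> P p}. a' \<circ> inv \<rho> \<circ> \<rho> = a'"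
      using permutes_inverses(2)[OF r] by (auto simp: fun_eq_iff)
    show "(\<lambda>p. p \<circ> \<rho>) ` {p. p permutes A \<and> P (p \<circ> \<rho>)} \<subseteq> {p. p permutes A \<and> P p}"
      using permutes_compose[OF r] by blast
    show "(\<lambda>p. p \<circ> inv \<rho>) ` {p. p permutes A \<and> P p} \<subseteq> {p. p permutes A \<and> P (p \<circ> \<rho>)}"
    proof safe
      fix p assume p: "p permutes A" "P p"
      show "p \<circ> inv \<rho> permutes A" using permutes_compose[OF ri p(1)] .
      have "p \<circ> inv \<rho> \<circ> \<rho> = p" using permutes_inverses(2)[OF r] by (auto simp: fun_eq_iff)
      then show "P (p \<circ> inv \<rho> \<circ> \<rho>)" using p by simp
    qed
  qed
qed

definition pa :: "(nat \<Rightarrow> nat) \<Rightarrow> nat \<Rightarrow> edge set \<Rightarrow> vert \<Rightarrow> vert" where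
  "pa X n l w = (THE v. v \<in> Vg X n \<and> (v, w) \<in> l)"

lemma vl_pa: assumes "vl X n l" "w \<in> Vg X (Suc n)"
  shows "pa X n l w \<in> Vg X n \<and> (pa X n l w, w) \<in> l"
proof -
  have "\<exists>!v. v \<in> Vg X n \<and> (v, w) \<in> l" using assms unfolding vl_def by auto
  then show ?thesis unfolding pa_def by (rule theI')
qed

lemma vl_mem: assumes "vl X n l" shows "(v, w) \<in> l \<longleftrightarrow> w \<in> Vg X (Suc n) \<and> v = pa X n l w"
proof
  assume vw: "(v, w) \<in> l"
  then have w: "w \<in> Vg X (Suc n)" and v: "v \<in> Vg X n" using assms unfolding vl_def by auto
  have "\<exists>!v. v \<in> Vg X n \<and> (v, w) \<in> l" using assms w unfolding vl_def by auto
  then show "w \<in> Vg X (Suc n) \<and> v = pa X n l w" using vl_pa[OF assms w] v vw w by auto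
next
  assume "w \<in> Vg X (Suc n) \<and> v = pa X n l w"
  then show "(v, w) \<in> l" using vl_pa[OF assms] by auto
qed

lemma vl_sub: "vl X n l \<Longrightarrow> l \<subseteq> Vg X n \<times> Vg X (Suc n)" unfolding vl_def by auto

definition kvg :: "(nat \<Rightarrow> nat) \<Rightarrow> nat \<Rightarrow> edge set \<Rightarrow> nat \<Rightarrow> nat" where
  "kvg X n l = (\<lambda>i\<in>{1..X n}. od l (n, i))"

lemma od_pa: assumes "vl X n l" shows "od l v = card {w \<in> Vg X (Suc n). pa X n l w = v}"
proof -
  have "{w. (v, w) \<in> l} = {w \<in> Vg X (Suc n). pa X n l w = v}" using vl_mem[OF assms] by auto
  then show ?thesis unfolding od_def by simp
qed

lemma FC:
  assumes l1: "vl X n l1" and l2: "vl X n l2" and k: "kvg X n l1 = kvg X n l2"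
  shows "\<exists>\<rho>. \<rho> permutes Vg X (Suc n) \<and> map_prod id \<rho> ` l1 = l2"
proof -
  let ?A = "Vg X (Suc n)" and ?B = "Vg X n"
  have "\<exists>\<rho>. \<rho> permutes ?A \<and> (\<forall>a\<in>?A. pa X n l2 (\<rho> a) = pa X n l1 a)"
  proof (rule fibre_perm)
    show "pa X n l1 ` ?A \<subseteq> ?B" using vl_pa[OF l1] by auto
    show "pa X n l2 ` ?A \<subseteq> ?B" using vl_pa[OF l2] by auto
    fix b assume b: "b \<in> ?B"
    then obtain i where bi: "b = (n, i)" "i \<in> {1..X n}" by (auto simp: Vg_def)
    have "od l1 (n, i) = od l2 (n, i)" using fun_cong[OF k, of i] bi(2) unfolding kvg_def by simp
    then show "card {a\<in>?A. pa X n l1 a = b} = card {a\<in>?A. pa X n l2 a = b}"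
      using od_pa[OF l1] od_pa[OF l2] bi by simp
  qed simp
  then obtain \<rho> where r: "\<rho> permutes ?A" "\<And>a. a \<in> ?A \<Longrightarrow> pa X n l2 (\<rho> a) = pa X n l1 a" by blast
  have "map_prod id \<rho> ` l1 = l2"
  proof (intro set_eqI iffI)
    fix x assume "x \<in> map_prod id \<rho> ` l1"
    then obtain v w where x: "x = (v, \<rho> w)" "(v, w) \<in> l1" by auto
    then have w: "w \<in> ?A" "v = pa X n l1 w" using vl_mem[OF l1] by auto
    have "\<rho> w \<in> ?A" using permutes_in_image[OF r(1)] w by simp
    then show "x \<in> l2" using x w r(2)[OF w(1)] vl_mem[OF l2] by auto
  next
    fix x assume x: "x \<in> l2"
    obtain v w' where xv: "x = (v, w')" by (cases x)
    then have w': "w' \<in> ?A" "v = pa X n l2 w'" using vl_mem[OF l2] x by auto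
    define w where "w = inv \<rho> w'"
    have w: "w \<in> ?A" "\<rho> w = w'" using w' permutes_inverses(1)[OF r(1)] permutes_in_image[OF permutes_inv[OF r(1)]]
      unfolding w_def by auto
    have "(v, w) \<in> l1" using vl_mem[OF l1] w w' r(2)[OF w(1)] by auto
    moreover have "x = map_prod id \<rho> (v, w)" using xv w by simp
    ultimately show "x \<in> map_prod id \<rho> ` l1" by (rule rev_image_eqI)
  qed
  then show ?thesis using r(1) by blast
qed

lemma Xi_cls: assumes l: "vl X n l" and a: "a \<in> Vg X (Suc n)"
  shows "{w\<in>Vg X (Suc n). pa X n l w = pa X n l a} \<in> Xi X l n"
proof -
  have e: "{w\<in>Vg X (Suc n). (pa X n l a, w) \<in> l} = {w\<in>Vg X (Suc n). pa X n l w = pa X n l a}"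
    using vl_mem[OF l] by auto
  have v: "pa X n l a \<in> Vg X n" using vl_pa[OF l a] by simp
  have h1: "{w\<in>Vg X (Suc n). (pa X n l a, w) \<in> l} \<in> {{w \<in> Vg X (Suc n). (v, w) \<in> l} |v. v \<in> Vg X n}"
    by (rule CollectI, rule exI[of _ "pa X n l a"]) (simp add: v)
  have "a \<in> {w\<in>Vg X (Suc n). pa X n l w = pa X n l a}" using a by simp
  then have h2: "{w\<in>Vg X (Suc n). (pa X n l a, w) \<in> l} \<notin> {{}}" unfolding e by blast
  have "{w\<in>Vg X (Suc n). (pa X n l a, w) \<in> l} \<in> Xi X l n" unfolding Xi_def by (rule DiffI[OF h1 h2])
  then show ?thesis unfolding e .
qed

lemma Xi_mem: assumes l: "vl X n l" and C: "C \<in> Xi X l n"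
  shows "\<exists>v\<in>Vg X n. C = {w\<in>Vg X (Suc n). pa X n l w = v}"
proof -
  have "C \<in> {{w \<in> Vg X (Suc n). (v, w) \<in> l} |v. v \<in> Vg X n}" using C unfolding Xi_def by (rule DiffD1)
  then obtain v where v: "v \<in> Vg X n" "C = {w \<in> Vg X (Suc n). (v, w) \<in> l}" by blast
  have "{w \<in> Vg X (Suc n). (v, w) \<in> l} = {w\<in>Vg X (Suc n). pa X n l w = v}" using vl_mem[OF l] by auto
  then show ?thesis using v by blast
qed

lemma BC:
  assumes l1: "vl X n l1" and l2: "vl X n l2" and xi: "Xi X l1 n = Xi X l2 n"
  shows "\<exists>\<rho>. \<rho> permutes Vg X n \<and> map_prod \<rho> id ` l1 = l2"
proof -
  let ?A = "Vg X (Suc n)" and ?B = "Vg X n"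
  let ?f1 = "pa X n l1" and ?f2 = "pa X n l2"
  have cls: "{w\<in>?A. ?f1 w = ?f1 a} = {w\<in>?A. ?f2 w = ?f2 a}" if a: "a \<in> ?A" for a
  proof -
    have "{w\<in>?A. ?f1 w = ?f1 a} \<in> Xi X l2 n" using Xi_cls[OF l1 a] unfolding xi .
    from Xi_mem[OF l2 this] obtain v where v: "v \<in> ?B" "{w\<in>?A. ?f1 w = ?f1 a} = {w\<in>?A. ?f2 w = v}" by blast
    have "a \<in> {w\<in>?A. ?f1 w = ?f1 a}" using a by simp
    then have "?f2 a = v" using v(2) by simp
    then show ?thesis using v(2) by simp
  qed
  have "\<exists>\<rho>. \<rho> permutes ?B \<and> (\<forall>a\<in>?A. \<rho> (?f1 a) = ?f2 a)"
  proof (rule partition_perm)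
    show "?f1 ` ?A \<subseteq> ?B" using vl_pa[OF l1] by auto
    show "?f2 ` ?A \<subseteq> ?B" using vl_pa[OF l2] by auto
    fix a a' assume a: "a \<in> ?A" "a' \<in> ?A"
    have "?f1 a = ?f1 a' \<longleftrightarrow> a' \<in> {w\<in>?A. ?f1 w = ?f1 a}" using a by auto
    also have "\<dots> \<longleftrightarrow> a' \<in> {w\<in>?A. ?f2 w = ?f2 a}" using cls[OF a(1)] by simp
    also have "\<dots> \<longleftrightarrow> ?f2 a = ?f2 a'" using a by auto
    finally show "?f1 a = ?f1 a' \<longleftrightarrow> ?f2 a = ?f2 a'" .
  qed simp
  then obtain \<rho> where r: "\<rho> permutes ?B" "\<And>a. a \<in> ?A \<Longrightarrow> \<rho> (?f1 a) = ?f2 a" by blast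
  have "map_prod \<rho> id ` l1 = l2"
  proof (intro set_eqI iffI)
    fix x assume "x \<in> map_prod \<rho> id ` l1"
    then obtain v w where x: "x = (\<rho> v, w)" "(v, w) \<in> l1" by auto
    then have w: "w \<in> ?A" "v = ?f1 w" using vl_mem[OF l1] by auto
    then show "x \<in> l2" using x r(2)[OF w(1)] vl_mem[OF l2] by auto
  next
    fix x assume x: "x \<in> l2"
    obtain v w where xv: "x = (v, w)" by (cases x)
    then have w: "w \<in> ?A" "v = ?f2 w" using vl_mem[OF l2] x by auto
    have "(?f1 w, w) \<in> l1" using vl_pa[OF l1 w(1)] by auto
    moreover have "x = map_prod \<rho> id (?f1 w, w)" using xv w r(2)[OF w(1)] by simp
    ultimately show "x \<in> map_prod \<rho> id ` l1" by (rule rev_image_eqI)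
  qed
  then show ?thesis using r(1) by blast
qed

lemma mem_mp: assumes "bij p" "bij q" shows "(v, w) \<in> map_prod p q ` l \<longleftrightarrow> (inv p v, inv q w) \<in> l"
proof
  assume "(v, w) \<in> map_prod p q ` l"
  then obtain a b where "(a, b) \<in> l" "v = p a" "w = q b" by auto
  then show "(inv p v, inv q w) \<in> l" using assms by (simp add: bij_is_inj)
next
  assume "(inv p v, inv q w) \<in> l"
  moreover have "(v, w) = map_prod p q (inv p v, inv q w)" using assms by (simp add: surj_f_inv_f bij_is_surj)
  ultimately show "(v, w) \<in> map_prod p q ` l" by (rule rev_image_eqI)
qed

lemma vl_perm1: assumes l: "vl X n l" and p: "p permutes Vg X n" shows "vl X n (map_prod p id ` l)"
proof -
  have bp: "bij p" using permutes_bij[OF p] .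
  have ip: "inv p permutes Vg X n" using permutes_inv[OF p] .
  have m: "(v, w) \<in> map_prod p id ` l \<longleftrightarrow> (inv p v, w) \<in> l" for v w using mem_mp[OF bp bij_id] by simp
  show ?thesis unfolding vl_def
  proof (intro conjI ballI)
    show "map_prod p id ` l \<subseteq> Vg X n \<times> Vg X (Suc n)" using vl_sub[OF l] permutes_in_image[OF p] by auto
    fix w assume w: "w \<in> Vg X (Suc n)"
    have h1: "(p (pa X n l w), w) \<in> map_prod p id ` l" using vl_pa[OF l w] by (intro rev_image_eqI[of "(pa X n l w, w)"]) auto
    have h2: "p (pa X n l w) \<in> Vg X n" using vl_pa[OF l w] permutes_in_image[OF p] by auto
    have h3: "v = p (pa X n l w)" if "v \<in> Vg X n" "(v, w) \<in> map_prod p id ` l" for v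
    proof -
      have "(inv p v, w) \<in> l" using m that by simp
      then have "inv p v = pa X n l w" using vl_mem[OF l] by auto
      moreover have "p (inv p v) = v" by (rule permutes_inverses(1)[OF p])
      ultimately show ?thesis by simp
    qed
    show "\<exists>!v. v \<in> Vg X n \<and> (v, w) \<in> map_prod p id ` l"
    proof (rule ex1I[where a="p (pa X n l w)"])
      show "p (pa X n l w) \<in> Vg X n \<and> (p (pa X n l w), w) \<in> map_prod p id ` l" using h1 h2 by (rule conjI[rotated])
      fix v assume "v \<in> Vg X n \<and> (v, w) \<in> map_prod p id ` l"
      then show "v = p (pa X n l w)" using h3 by blast
    qed
  qed
qed

lemma vl_perm2: assumes l: "vl X n l" and s: "s permutes Vg X (Suc n)" shows "vl X n (map_prod id s ` l)"
proof -
  have bs: "bij s" using permutes_bij[OF s] .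
  have m: "(v, w) \<in> map_prod id s ` l \<longleftrightarrow> (v, inv s w) \<in> l" for v w using mem_mp[OF bij_id bs] by simp
  show ?thesis unfolding vl_def
  proof (intro conjI ballI)
    show "map_prod id s ` l \<subseteq> Vg X n \<times> Vg X (Suc n)" using vl_sub[OF l] permutes_in_image[OF s] by auto
    fix w assume w: "w \<in> Vg X (Suc n)"
    have w': "inv s w \<in> Vg X (Suc n)" using permutes_in_image[OF permutes_inv[OF s]] w by simp
    have "\<exists>!v. v \<in> Vg X n \<and> (v, inv s w) \<in> l" using l w' unfolding vl_def by auto
    then show "\<exists>!v. v \<in> Vg X n \<and> (v, w) \<in> map_prod id s ` l" using m by simp
  qed
qed

definition qp :: "(nat \<Rightarrow> nat) \<Rightarrow> nat \<Rightarrow> (vert \<Rightarrow> vert) \<Rightarrow> nat \<Rightarrow> nat" where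
  "qp X n p = (\<lambda>i. if i \<in> {1..X n} then snd (inv p (n, i)) else i)"

lemma qp_in: assumes p: "p permutes Vg X n" and i: "i \<in> {1..X n}"
  shows "inv p (n, i) = (n, qp X n p i)" "qp X n p i \<in> {1..X n}"
proof -
  have "(n, i) \<in> Vg X n" using i by (simp add: Vg_def)
  then have "inv p (n, i) \<in> Vg X n" using permutes_in_image[OF permutes_inv[OF p]] by simp
  then show "inv p (n, i) = (n, qp X n p i)" "qp X n p i \<in> {1..X n}" using i unfolding qp_def by (auto simp: Vg_def)
qed

lemma qp_perm: assumes p: "p permutes Vg X n" shows "qp X n p permutes {1..X n}"
proof (rule bij_imp_permutes)
  have inj: "inj_on (qp X n p) {1..X n}"
  proof (rule inj_onI)
    fix i j assume ij: "i \<in> {1..X n}" "j \<in> {1..X n}" "qp X n p i = qp X n p j"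
    then have "inv p (n, i) = inv p (n, j)" using qp_in[OF p] by metis
    then show "i = j" using permutes_inj[OF permutes_inv[OF p]] by (auto dest: injD)
  qed
  have "qp X n p ` {1..X n} \<subseteq> {1..X n}" using qp_in(2)[OF p] by auto
  then have "qp X n p ` {1..X n} = {1..X n}" using endo_inj_surj[OF _ _ inj] by simp
  then show "bij_betw (qp X n p) {1..X n} {1..X n}" using inj unfolding bij_betw_def by auto
qed (unfold qp_def, rule if_not_P, assumption)

lemma kvg_perm: assumes p: "p permutes Vg X n"
  shows "kvg X n (map_prod p id ` l) = kvg X n l \<circ> qp X n p"
proof
  fix i
  show "kvg X n (map_prod p id ` l) i = (kvg X n l \<circ> qp X n p) i"
  proof (cases "i \<in> {1..X n}")
    case True
    have bp: "bij p" using permutes_bij[OF p] .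
    have m: "\<And>v w. (v, w) \<in> map_prod p id ` l \<longleftrightarrow> (inv p v, w) \<in> l" using mem_mp[OF bp bij_id] by simp
    have "{w. ((n, i), w) \<in> map_prod p id ` l} = {w. (inv p (n, i), w) \<in> l}"
      by (simp only: m)
    then have "od (map_prod p id ` l) (n, i) = od l (n, qp X n p i)" unfolding od_def qp_in(1)[OF p True] by simp
    then show ?thesis using True qp_in(2)[OF p True] unfolding kvg_def by simp
  next
    case False
    have "qp X n p i = i" unfolding qp_def using False by (rule if_not_P)
    then show ?thesis unfolding kvg_def o_def restrict_def using False by (simp only: if_not_P if_False)
  qed
qed

lemma Xi_perm: assumes s: "s permutes Vg X (Suc n)"
  shows "Xi X (map_prod id s ` l) n = (\<lambda>B. s ` B) ` Xi X l n"
proof -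
  have bs: "bij s" using permutes_bij[OF s] .
  have m: "(v, w) \<in> map_prod id s ` l \<longleftrightarrow> (v, inv s w) \<in> l" for v w using mem_mp[OF bij_id bs] by simp
  have C: "{w \<in> Vg X (Suc n). (v, w) \<in> map_prod id s ` l} = s ` {w \<in> Vg X (Suc n). (v, w) \<in> l}" for v
  proof (intro set_eqI iffI)
    fix w assume "w \<in> {w \<in> Vg X (Suc n). (v, w) \<in> map_prod id s ` l}"
    then have w: "w \<in> Vg X (Suc n)" "(v, inv s w) \<in> l" by (simp_all add: m)
    have "inv s w \<in> Vg X (Suc n)" using permutes_in_image[OF permutes_inv[OF s]] w by simp
    moreover have "w = s (inv s w)" using permutes_inverses(1)[OF s] by metis
    ultimately show "w \<in> s ` {w \<in> Vg X (Suc n). (v, w) \<in> l}" using w by blast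
  next
    fix w assume "w \<in> s ` {w \<in> Vg X (Suc n). (v, w) \<in> l}"
    then obtain u where u: "w = s u" "u \<in> Vg X (Suc n)" "(v, u) \<in> l" by auto
    have "(v, s u) \<in> map_prod id s ` l" by (rule rev_image_eqI[OF u(3)]) simp
    then show "w \<in> {w \<in> Vg X (Suc n). (v, w) \<in> map_prod id s ` l}"
      using permutes_in_image[OF s] u by auto
  qed
  show ?thesis unfolding Xi_def C
  proof (intro set_eqI iffI)
    fix x assume "x \<in> {s ` {w \<in> Vg X (Suc n). (v, w) \<in> l} |v. v \<in> Vg X n} - {{}}"
    then obtain v where v: "v \<in> Vg X n" "x = s ` {w \<in> Vg X (Suc n). (v, w) \<in> l}" "x \<noteq> {}" by blast
    then have "{w \<in> Vg X (Suc n). (v, w) \<in> l} \<in> {{w \<in> Vg X (Suc n). (v, w) \<in> l} |v. v \<in> Vg X n} - {{}}" by blast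
    then show "x \<in> (\<lambda>B. s ` B) ` ({{w \<in> Vg X (Suc n). (v, w) \<in> l} |v. v \<in> Vg X n} - {{}})"
      using v(2) by (rule rev_image_eqI)
  next
    fix x assume "x \<in> (\<lambda>B. s ` B) ` ({{w \<in> Vg X (Suc n). (v, w) \<in> l} |v. v \<in> Vg X n} - {{}})"
    then obtain y where y: "x = s ` y" "y \<in> {{w \<in> Vg X (Suc n). (v, w) \<in> l} |v. v \<in> Vg X n}" "y \<noteq> {}" by blast
    then obtain v where v: "v \<in> Vg X n" "y = {w \<in> Vg X (Suc n). (v, w) \<in> l}" by blast
    show "x \<in> {s ` {w \<in> Vg X (Suc n). (v, w) \<in> l} |v. v \<in> Vg X n} - {{}}"
      using y v by blast
  qed
qed

lemma mp_split: "map_prod p p' ` l = map_prod id p' ` (map_prod p id ` l)"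
  "map_prod p p' ` l = map_prod p id ` (map_prod id p' ` l)"
  by (auto simp: image_image map_prod_def split_def)

lemma all_atMost_upd: "(\<forall>m\<in>{..N::nat}. f m = (l(N:=x)) m) \<longleftrightarrow> (\<forall>m\<in>{..<N}. f m = l m) \<and> f N = x"
proof
  assume h: "\<forall>m\<in>{..N}. f m = (l(N:=x)) m"
  show "(\<forall>m\<in>{..<N}. f m = l m) \<and> f N = x"
  proof
    show "\<forall>m\<in>{..<N}. f m = l m"
    proof
      fix m assume m: "m \<in> {..<N}"
      then have "m \<in> {..N}" "m \<noteq> N" by auto
      then show "f m = l m" using h by fastforce
    qed
    show "f N = x" using h by simp
  qed
next
  assume h: "(\<forall>m\<in>{..<N}. f m = l m) \<and> f N = x"
  show "\<forall>m\<in>{..N}. f m = (l(N:=x)) m"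
  proof
    fix m assume "m \<in> {..N}"
    then consider "m = N" | "m \<in> {..<N}" by fastforce
    then show "f m = (l(N:=x)) m" using h by cases auto
  qed
qed

lemma enat_le_lt: "m \<le> n \<Longrightarrow> enat n < \<tau> \<Longrightarrow> enat m < \<tau>"
  by (meson enat_ord_simps(1) le_less_trans)

lemma sum_if_card: "finite A \<Longrightarrow> (\<Sum>x\<in>A. if P x then c else 0) = c * real (card {x\<in>A. P x})"
  by (simp add: sum.If_cases Int_def conj_commute)

context prob_space begin
lemma dv_cong: assumes "dv Y" "\<And>\<omega>. \<omega> \<in> space M \<Longrightarrow> Y \<omega> = Z \<omega>" shows "dv Z"
proof -
  have e: "{\<omega>\<in>space M. Z \<omega> = y} = {\<omega>\<in>space M. Y \<omega> = y}" for y using assms(2) by auto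
  show ?thesis using assms unfolding dv_def e by auto
qed
end

context gset begin

abbreviation K where "K n \<omega> \<equiv> Kvec X (E \<omega>) n"

lemma K_eq: "\<omega> \<in> space M \<Longrightarrow> K n \<omega> = kvg X n (L n \<omega>)"
  using Kvec_kv by (simp add: kv_def kvg_def)

lemma dv_K: "enat (Suc n) < \<tau> \<Longrightarrow> dv (K n)"
  by (rule dv_cong[OF dv_comp[OF dv_L]]) (simp_all add: K_eq)

definition repK :: "nat \<Rightarrow> (nat \<Rightarrow> nat) \<Rightarrow> edge set" where "repK n \<kappa> = (SOME l. vl X n l \<and> kvg X n l = \<kappa>)"
definition phiK :: "nat \<Rightarrow> edge set \<Rightarrow> (nat \<Rightarrow> nat) \<Rightarrow> real" where
  "phiK n t \<kappa> = real (card {p'. p' permutes Vg X (Suc n) \<and> map_prod id p' ` repK n \<kappa> = t})"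
definition hK :: "nat \<Rightarrow> edge set \<Rightarrow> (vert \<Rightarrow> vert) \<Rightarrow> edge set \<Rightarrow> real" where
  "hK n t p l = real (card {p'. p' permutes Vg X (Suc n) \<and> map_prod p p' ` l = t})"

lemma hK_phi: assumes l: "vl X n l" and p: "p permutes Vg X n"
  shows "hK n t p l = phiK n t (kvg X n l \<circ> qp X n p)"
proof -
  define l1 where "l1 = map_prod p id ` l"
  have v1: "vl X n l1" unfolding l1_def by (rule vl_perm1[OF l p])
  have k1: "kvg X n l1 = kvg X n l \<circ> qp X n p" unfolding l1_def by (rule kvg_perm[OF p])
  define r where "r = repK n (kvg X n l1)"
  have "vl X n r \<and> kvg X n r = kvg X n l1" unfolding r_def repK_def by (rule someI[of _ l1]) (simp add: v1)
  then obtain \<rho> where \<rho>: "\<rho> permutes Vg X (Suc n)" "map_prod id \<rho> ` r = l1" using FC[of X n r l1] v1 by blast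
  have e: "map_prod p p' ` l = map_prod id (p' \<circ> \<rho>) ` r" for p'
  proof -
    have "map_prod p p' ` l = map_prod id p' ` l1" unfolding l1_def by (rule mp_split(1))
    also have "\<dots> = map_prod id p' ` (map_prod id \<rho> ` r)" using \<rho>(2) by simp
    also have "\<dots> = map_prod id (p' \<circ> \<rho>) ` r" by (simp add: image_comp map_prod.comp)
    finally show ?thesis .
  qed
  have "hK n t p l = real (card {p'. p' permutes Vg X (Suc n) \<and> map_prod id (p' \<circ> \<rho>) ` r = t})"
    unfolding hK_def e ..
  also have "\<dots> = real (card {p'. p' permutes Vg X (Suc n) \<and> map_prod id p' ` r = t})"
    using card_perm_comp[OF \<rho>(1), of "\<lambda>q. map_prod id q ` r = t"] by simp
  also have "\<dots> = phiK n t (kvg X n l1)" unfolding phiK_def r_def ..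
  finally show ?thesis using k1 by simp
qed

lemma Gen_le: "m \<le> n \<Longrightarrow> enat n < \<tau> \<Longrightarrow> enat m < \<tau>" by (rule enat_le_lt)

end

locale gF = gset + assumes fn: "forward_neutral M \<tau> X E"
begin

lemma fn_exch: assumes "enat (Suc n) < \<tau>" "q permutes {1..X n}"
  shows "distr M (count_space UNIV) (K n) = distr M (count_space UNIV) (\<lambda>\<omega>. K n \<omega> \<circ> q)"
  using fn assms unfolding forward_neutral_def by blast

lemma fn_indep: assumes "enat (Suc n) < \<tau>"
  shows "indep_rv M (count_space UNIV) (K n) (PiM {..<n} (\<lambda>_. count_space UNIV)) (\<lambda>\<omega>. \<lambda>m\<in>{..<n}. L m \<omega>)"
  using fn assms unfolding forward_neutral_def by blast

lemma exch_int: assumes n: "enat (Suc n) < \<tau>" and q: "q permutes {1..X n}"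
  shows "integral\<^sup>L M (\<lambda>\<omega>. g (K n \<omega> \<circ> q)) = integral\<^sup>L M (\<lambda>\<omega>. (g (K n \<omega>) :: real))"
proof -
  have m1: "(\<lambda>\<omega>. K n \<omega> \<circ> q) \<in> M \<rightarrow>\<^sub>M count_space UNIV" using dv_meas[OF dv_comp[OF dv_K[OF n]]] .
  have m2: "K n \<in> M \<rightarrow>\<^sub>M count_space UNIV" using dv_meas[OF dv_K[OF n]] .
  have "integral\<^sup>L M (\<lambda>\<omega>. g (K n \<omega> \<circ> q)) = integral\<^sup>L (distr M (count_space UNIV) (\<lambda>\<omega>. K n \<omega> \<circ> q)) g"
    by (rule integral_distr[OF m1, symmetric]) (rule borel_measurable_count_space)
  also have "\<dots> = integral\<^sup>L (distr M (count_space UNIV) (K n)) g" using fn_exch[OF n q] by simp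
  also have "\<dots> = integral\<^sup>L M (\<lambda>\<omega>. g (K n \<omega>))"
    by (rule integral_distr[OF m2]) (rule borel_measurable_count_space)
  finally show ?thesis .
qed

end

lemma restr_eq: "l \<in> extensional I \<Longrightarrow> (restrict g I = l) \<longleftrightarrow> (\<forall>m\<in>I. g m = l m)"
  by (auto simp: extensional_def fun_eq_iff)

lemma prod_atMost_upd: "(\<Prod>m\<in>{..Suc N}. f m ((s(Suc N := x)) m)) = (\<Prod>m\<in>{..N}. f m (s m)) * (f (Suc N) x :: real)"
  by (simp add: prod.atMost_Suc)

context gF begin

definition Hval where "Hval N t = integral\<^sup>L M (\<lambda>\<omega>. phiK N t (K N \<omega>))"

lemma dv_W: assumes N: "enat (Suc N) < \<tau>"
  shows "dv (\<lambda>\<omega>. (\<lambda>m\<in>{..<N}. L m \<omega>, \<lambda>m\<in>{..N}. S m \<omega>))"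
proof (rule dv_pair; rule dv_restrict)
  fix m assume "m \<in> {..<N}"
  then show "dv (L m)" using N by (intro dv_L Gen_le[of "Suc m" "Suc N"]) auto
next
  fix m assume "m \<in> {..N}"
  then show "dv (S m)" using N by (intro dv_S Gen_le[of m "Suc N"]) auto
qed simp_all

lemma KFpt:
  assumes N: "enat (Suc N) < \<tau>"
  shows "prob ({\<omega>\<in>space M. T N \<omega> = t} \<inter> {\<omega>\<in>space M. (\<lambda>m\<in>{..<N}. L m \<omega>, \<lambda>m\<in>{..N}. S m \<omega>) = w}) =
     Hval N t / real (card (PS (Suc N))) * prob {\<omega>\<in>space M. (\<lambda>m\<in>{..<N}. L m \<omega>, \<lambda>m\<in>{..N}. S m \<omega>) = w}"
proof -
  obtain l s where w: "w = (l, s)" by (cases w)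
  show ?thesis
  proof (cases "l \<in> extensional {..<N} \<and> s \<in> extensional {..N}")
    case False
    then have e: "{\<omega>\<in>space M. (\<lambda>m\<in>{..<N}. L m \<omega>, \<lambda>m\<in>{..N}. S m \<omega>) = w} = {}" unfolding w by auto
    show ?thesis unfolding e by simp
  next
    case True
    define Ev where "Ev = {\<omega>\<in>space M. (\<forall>m\<in>{..<N}. L m \<omega> = l m) \<and> (\<forall>m\<in>{..N}. S m \<omega> = s m)}"
    have evW: "{\<omega>\<in>space M. (\<lambda>m\<in>{..<N}. L m \<omega>, \<lambda>m\<in>{..N}. S m \<omega>) = w} = Ev"
      unfolding w Ev_def using True by (simp add: restr_eq)
    define A0 where "A0 = {\<omega>\<in>space M. \<forall>m\<in>{..<N}. L m \<omega> = l m}"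
    define Pi where "Pi = (\<Prod>m\<in>{..N}. prob {\<omega>\<in>space M. S m \<omega> = s m})"
    define PS' where "PS' = PS (Suc N)"
    have N0: "enat N < \<tau>" using enat_Suc_lt[OF N] .
    have Fs: "{..<N} \<subseteq> {n. enat (Suc n) < \<tau>}" using N by (auto intro: Gen_le[of _ "Suc N"])
    have Gs: "{..N} \<subseteq> {n. enat n < \<tau>}" using N by (auto intro: Gen_le[of _ "Suc N"])
    have Fs': "{..N} \<subseteq> {n. enat (Suc n) < \<tau>}" using N by (auto intro: Gen_le[of _ "Suc N"])
    have Gs': "{..Suc N} \<subseteq> {n. enat n < \<tau>}" using N by (auto intro: Gen_le[of _ "Suc N"])
    have pEv: "prob Ev = prob A0 * Pi" unfolding Ev_def A0_def Pi_def by (rule H1[OF _ Fs _ Gs]) simp_all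
    have A0ev: "A0 \<in> events" unfolding A0_def using Fs by (intro ev_all dv_L) auto
    have Sev: "{\<omega>\<in>space M. \<forall>m\<in>{..N}. S m \<omega> = s m} \<in> events" using Gs by (intro ev_all dv_S) auto
    have "Ev = A0 \<inter> {\<omega>\<in>space M. \<forall>m\<in>{..N}. S m \<omega> = s m}" unfolding Ev_def A0_def by auto
    then have Ev_ev: "Ev \<in> events" using A0ev Sev by simp
    have Tev: "{\<omega>\<in>space M. T N \<omega> = t} \<in> events" by (rule dv_ev[OF dv_T[OF N]])
    have dvY: "dv (\<lambda>\<omega>. (L N \<omega>, S (Suc N) \<omega>))" by (rule dv_pair[OF dv_L[OF N] dv_S[OF N]])
    have Yin: "(L N \<omega>, S (Suc N) \<omega>) \<in> LR N \<times> PS'" if "\<omega> \<in> space M" for \<omega>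
      using L_LR S_PS[OF that N] unfolding PS'_def by simp
    have tp: "prob ({\<omega>\<in>space M. T N \<omega> = t} \<inter> Ev) =
      (\<Sum>y\<in>LR N \<times> PS'. prob (({\<omega>\<in>space M. T N \<omega> = t} \<inter> Ev) \<inter> {\<omega>\<in>space M. (L N \<omega>, S (Suc N) \<omega>) = y}))"
      by (rule total_prob[OF _ Yin dv_ev[OF dvY]]) (auto simp: PS'_def intro: Tev Ev_ev)
    have split: "({\<omega>\<in>space M. T N \<omega> = t} \<inter> Ev) \<inter> {\<omega>\<in>space M. (L N \<omega>, S (Suc N) \<omega>) = (lam, p')} =
       (if map_prod (s N) p' ` lam = t then {\<omega>\<in>space M. (\<forall>m\<in>{..N}. L m \<omega> = (l(N:=lam)) m) \<and> (\<forall>m\<in>{..Suc N}. S m \<omega> = (s(Suc N:=p')) m)} else {})" for lam p'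
    proof (cases "map_prod (s N) p' ` lam = t")
      case True
      show ?thesis unfolding if_P[OF True] all_atMost_upd lessThan_Suc_atMost Ev_def
        using True by (auto simp: T_def')
    next
      case False
      show ?thesis unfolding if_not_P[OF False] Ev_def
        using False by (auto simp: T_def')
    qed
    have trm: "prob (({\<omega>\<in>space M. T N \<omega> = t} \<inter> Ev) \<inter> {\<omega>\<in>space M. (L N \<omega>, S (Suc N) \<omega>) = (lam, p')}) =
       (if map_prod (s N) p' ` lam = t then prob (A0 \<inter> {\<omega>\<in>space M. L N \<omega> = lam}) * (Pi * prob {\<omega>\<in>space M. S (Suc N) \<omega> = p'}) else 0)" for lam p'
    proof (cases "map_prod (s N) p' ` lam = t")
      case True
      have "prob {\<omega>\<in>space M. (\<forall>m\<in>{..N}. L m \<omega> = (l(N:=lam)) m) \<and> (\<forall>m\<in>{..Suc N}. S m \<omega> = (s(Suc N:=p')) m)} =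
        prob {\<omega>\<in>space M. \<forall>m\<in>{..N}. L m \<omega> = (l(N:=lam)) m} * (\<Prod>m\<in>{..Suc N}. prob {\<omega>\<in>space M. S m \<omega> = (s(Suc N:=p')) m})"
        by (rule H1[OF _ Fs' _ Gs']) simp_all
      also have "{\<omega>\<in>space M. \<forall>m\<in>{..N}. L m \<omega> = (l(N:=lam)) m} = A0 \<inter> {\<omega>\<in>space M. L N \<omega> = lam}"
        unfolding all_atMost_upd A0_def by auto
      also have "(\<Prod>m\<in>{..Suc N}. prob {\<omega>\<in>space M. S m \<omega> = (s(Suc N:=p')) m}) = Pi * prob {\<omega>\<in>space M. S (Suc N) \<omega> = p'}"
      proof -
        have "(\<Prod>m\<in>{..N}. prob {\<omega>\<in>space M. S m \<omega> = (s(Suc N:=p')) m}) = Pi"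
          unfolding Pi_def by (rule prod.cong) auto
        then show ?thesis by (simp add: prod.atMost_Suc)
      qed
      finally show ?thesis unfolding split using True by simp
    next
      case False
      show ?thesis unfolding split using False by simp
    qed
    have inner: "(\<Sum>p'\<in>PS'. if map_prod (s N) p' ` lam = t then prob (A0 \<inter> {\<omega>\<in>space M. L N \<omega> = lam}) * (Pi * prob {\<omega>\<in>space M. S (Suc N) \<omega> = p'}) else 0) =
       Pi / real (card PS') * (hK N t (s N) lam * prob (A0 \<inter> {\<omega>\<in>space M. L N \<omega> = lam}))" for lam
    proof -
      have "(\<Sum>p'\<in>PS'. if map_prod (s N) p' ` lam = t then prob (A0 \<inter> {\<omega>\<in>space M. L N \<omega> = lam}) * (Pi * prob {\<omega>\<in>space M. S (Suc N) \<omega> = p'}) else 0) =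
        (\<Sum>p'\<in>PS'. if map_prod (s N) p' ` lam = t then prob (A0 \<inter> {\<omega>\<in>space M. L N \<omega> = lam}) * (Pi * (1 / real (card PS'))) else 0)"
        by (rule sum.cong[OF refl]) (simp add: prob_S[OF N] PS'_def)
      also have "\<dots> = prob (A0 \<inter> {\<omega>\<in>space M. L N \<omega> = lam}) * (Pi * (1 / real (card PS'))) * real (card {p'\<in>PS'. map_prod (s N) p' ` lam = t})"
        by (rule sum_if_card) (simp add: PS'_def)
      also have "{p'\<in>PS'. map_prod (s N) p' ` lam = t} = {p'. p' permutes Vg X (Suc N) \<and> map_prod (s N) p' ` lam = t}"
        unfolding PS'_def PS_def by simp
      finally show ?thesis unfolding hK_def by simp
    qed
    have "prob ({\<omega>\<in>space M. T N \<omega> = t} \<inter> Ev) = (\<Sum>lam\<in>LR N. \<Sum>p'\<in>PS'.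
        if map_prod (s N) p' ` lam = t then prob (A0 \<inter> {\<omega>\<in>space M. L N \<omega> = lam}) * (Pi * prob {\<omega>\<in>space M. S (Suc N) \<omega> = p'}) else 0)"
      unfolding tp sum.cartesian_product
    proof (rule sum.cong[OF refl])
      fix y :: "edge set \<times> (vert \<Rightarrow> vert)"
      obtain a b where y: "y = (a, b)" by (cases y)
      show "prob (({\<omega>\<in>space M. T N \<omega> = t} \<inter> Ev) \<inter> {\<omega>\<in>space M. (L N \<omega>, S (Suc N) \<omega>) = y}) =
        (case y of (lam, p') \<Rightarrow> if map_prod (s N) p' ` lam = t then prob (A0 \<inter> {\<omega>\<in>space M. L N \<omega> = lam}) * (Pi * prob {\<omega>\<in>space M. S (Suc N) \<omega> = p'}) else 0)"
        unfolding y case_prod_conv by (rule trm)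
    qed
    also have "\<dots> = Pi / real (card PS') * (\<Sum>lam\<in>LR N. hK N t (s N) lam * prob (A0 \<inter> {\<omega>\<in>space M. L N \<omega> = lam}))"
      unfolding inner sum_distrib_left ..
    also have "(\<Sum>lam\<in>LR N. hK N t (s N) lam * prob (A0 \<inter> {\<omega>\<in>space M. L N \<omega> = lam})) =
        integral\<^sup>L M (\<lambda>\<omega>. indicator A0 \<omega> * hK N t (s N) (L N \<omega>))"
      by (rule GI[symmetric, OF LR_fin L_LR dv_ev[OF dv_L[OF N]] A0ev])
    finally have main: "prob ({\<omega>\<in>space M. T N \<omega> = t} \<inter> Ev) = Pi / real (card PS') * integral\<^sup>L M (\<lambda>\<omega>. indicator A0 \<omega> * hK N t (s N) (L N \<omega>))" .
    have "prob ({\<omega>\<in>space M. T N \<omega> = t} \<inter> Ev) = Hval N t / real (card PS') * prob Ev"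
    proof (cases "s N \<in> PS N")
      case True
      have sp: "s N permutes Vg X N" using True unfolding PS_def by simp
      let ?q = "qp X N (s N)"
      have "integral\<^sup>L M (\<lambda>\<omega>. indicator A0 \<omega> * hK N t (s N) (L N \<omega>)) =
          integral\<^sup>L M (\<lambda>\<omega>. indicator A0 \<omega> * (\<lambda>k. phiK N t (k \<circ> ?q)) (K N \<omega>))"
        by (rule Bochner_Integration.integral_cong[OF refl]) (simp add: K_eq hK_phi[OF L_vl[OF _ N] sp])
      also have "\<dots> = prob A0 * integral\<^sup>L M (\<lambda>\<omega>. (\<lambda>k. phiK N t (k \<circ> ?q)) (K N \<omega>))"
        unfolding A0_def by (rule indep_rv_cyl2[OF fn_indep[OF N] dv_K[OF N]]) auto
      also have "integral\<^sup>L M (\<lambda>\<omega>. (\<lambda>k. phiK N t (k \<circ> ?q)) (K N \<omega>)) = Hval N t"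
        unfolding Hval_def using exch_int[OF N qp_perm[OF sp]] by simp
      finally show ?thesis using main pEv by simp
    next
      case False
      have "prob {\<omega>\<in>space M. S N \<omega> = s N} = 0" using prob_S[OF N0] False by simp
      then have "Pi = 0" unfolding Pi_def by (intro prod_zero bexI[of _ N]) auto
      then show ?thesis using main pEv by simp
    qed
    then show ?thesis unfolding evW[symmetric] PS'_def .
  qed
qed

lemma KF:
  assumes N: "enat (Suc N) < \<tau>"
  shows "prob {\<omega>\<in>space M. T N \<omega> = t \<and> (\<lambda>m\<in>{..<N}. L m \<omega>, \<lambda>m\<in>{..N}. S m \<omega>) \<in> A} =
    prob {\<omega>\<in>space M. T N \<omega> = t} * prob {\<omega>\<in>space M. (\<lambda>m\<in>{..<N}. L m \<omega>, \<lambda>m\<in>{..N}. S m \<omega>) \<in> A}"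
proof -
  let ?c = "Hval N t / real (card (PS (Suc N)))"
  have gen: "prob {\<omega>\<in>space M. T N \<omega> = t \<and> (\<lambda>m\<in>{..<N}. L m \<omega>, \<lambda>m\<in>{..N}. S m \<omega>) \<in> B} =
      ?c * prob {\<omega>\<in>space M. (\<lambda>m\<in>{..<N}. L m \<omega>, \<lambda>m\<in>{..N}. S m \<omega>) \<in> B}" for B
    by (rule dist_from_point[OF KFpt[OF N] dv_W[OF N] dv_ev[OF dv_T[OF N]]])
  have "prob {\<omega>\<in>space M. T N \<omega> = t} = ?c"
    using gen[of UNIV] by (simp add: prob_space)
  then show ?thesis using gen[of A] by simp
qed

end

context gF begin

lemma FWD_IND:
  assumes "finite J" "J \<subseteq> {m. n \<le> m \<and> enat (Suc m) < \<tau>}" "finite J'" "J' \<subseteq> {m. m \<le> n \<and> enat m < \<tau>}"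
  shows "prob {\<omega>\<in>space M. (\<forall>j\<in>J. T j \<omega> = t j) \<and> (\<forall>j\<in>J'. S j \<omega> = s j)} =
    (\<Prod>j\<in>J. prob {\<omega>\<in>space M. T j \<omega> = t j}) * prob {\<omega>\<in>space M. \<forall>j\<in>J'. S j \<omega> = s j}"
  using assms
proof (induction "card J" arbitrary: J rule: less_induct)
  case less
  show ?case
  proof (cases "J = {}")
    case True then show ?thesis by simp
  next
    case False
    define N where "N = Max J"
    have NJ: "N \<in> J" unfolding N_def using Max_in[OF less.prems(1) False] .
    have N: "enat (Suc N) < \<tau>" "n \<le> N" using NJ less.prems(2) by auto
    define J0 where "J0 = J - {N}"
    have J0: "finite J0" "J0 \<subseteq> {m. n \<le> m \<and> enat (Suc m) < \<tau>}" "card J0 < card J"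
      unfolding J0_def using less.prems(1,2) NJ card_Diff1_less[OF less.prems(1) NJ] by auto
    have J0N: "j < N" if "j \<in> J0" for j
    proof -
      have "j \<le> N" using that unfolding J0_def N_def using Max_ge[OF less.prems(1)] by auto
      then show ?thesis using that unfolding J0_def by auto
    qed
    have J'N: "j \<le> N" if "j \<in> J'" for j using that less.prems(4) N(2) by auto
    define A where "A = {(l, s'). (\<forall>j\<in>J0. map_prod (s' j) (s' (Suc j)) ` l j = t j) \<and> (\<forall>j\<in>J'. s' j = s j)}"
    have eqW: "(\<lambda>m\<in>{..<N}. L m \<omega>, \<lambda>m\<in>{..N}. S m \<omega>) \<in> A \<longleftrightarrow> (\<forall>j\<in>J0. T j \<omega> = t j) \<and> (\<forall>j\<in>J'. S j \<omega> = s j)" for \<omega>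
    proof -
      have "(\<forall>j\<in>J0. map_prod ((\<lambda>m\<in>{..N}. S m \<omega>) j) ((\<lambda>m\<in>{..N}. S m \<omega>) (Suc j)) ` ((\<lambda>m\<in>{..<N}. L m \<omega>) j) = t j)
          \<longleftrightarrow> (\<forall>j\<in>J0. T j \<omega> = t j)"
      proof (intro ball_cong refl)
        fix j assume "j \<in> J0"
        then have "j < N" by (rule J0N)
        then show "map_prod ((\<lambda>m\<in>{..N}. S m \<omega>) j) ((\<lambda>m\<in>{..N}. S m \<omega>) (Suc j)) ` ((\<lambda>m\<in>{..<N}. L m \<omega>) j) = t j \<longleftrightarrow> T j \<omega> = t j"
          by (simp add: T_def')
      qed
      moreover have "(\<forall>j\<in>J'. (\<lambda>m\<in>{..N}. S m \<omega>) j = s j) \<longleftrightarrow> (\<forall>j\<in>J'. S j \<omega> = s j)"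
        using J'N by auto
      ultimately show ?thesis unfolding A_def by simp
    qed
    have "prob {\<omega>\<in>space M. (\<forall>j\<in>J. T j \<omega> = t j) \<and> (\<forall>j\<in>J'. S j \<omega> = s j)} =
        prob {\<omega>\<in>space M. T N \<omega> = t N \<and> (\<lambda>m\<in>{..<N}. L m \<omega>, \<lambda>m\<in>{..N}. S m \<omega>) \<in> A}"
    proof -
      have "J = insert N J0" unfolding J0_def using NJ by auto
      then have "{\<omega>\<in>space M. (\<forall>j\<in>J. T j \<omega> = t j) \<and> (\<forall>j\<in>J'. S j \<omega> = s j)} =
          {\<omega>\<in>space M. T N \<omega> = t N \<and> (\<lambda>m\<in>{..<N}. L m \<omega>, \<lambda>m\<in>{..N}. S m \<omega>) \<in> A}"
        unfolding eqW by auto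
      then show ?thesis by simp
    qed
    also have "\<dots> = prob {\<omega>\<in>space M. T N \<omega> = t N} * prob {\<omega>\<in>space M. (\<lambda>m\<in>{..<N}. L m \<omega>, \<lambda>m\<in>{..N}. S m \<omega>) \<in> A}"
      by (rule KF[OF N(1)])
    also have "prob {\<omega>\<in>space M. (\<lambda>m\<in>{..<N}. L m \<omega>, \<lambda>m\<in>{..N}. S m \<omega>) \<in> A} =
        prob {\<omega>\<in>space M. (\<forall>j\<in>J0. T j \<omega> = t j) \<and> (\<forall>j\<in>J'. S j \<omega> = s j)}"
      unfolding eqW ..
    also have "\<dots> = (\<Prod>j\<in>J0. prob {\<omega>\<in>space M. T j \<omega> = t j}) * prob {\<omega>\<in>space M. \<forall>j\<in>J'. S j \<omega> = s j}"
      by (rule less.hyps[OF J0(3) J0(1) J0(2) less.prems(3) less.prems(4)])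
    also have "prob {\<omega>\<in>space M. T N \<omega> = t N} * ((\<Prod>j\<in>J0. prob {\<omega>\<in>space M. T j \<omega> = t j}) * prob {\<omega>\<in>space M. \<forall>j\<in>J'. S j \<omega> = s j})
       = (\<Prod>j\<in>J. prob {\<omega>\<in>space M. T j \<omega> = t j}) * prob {\<omega>\<in>space M. \<forall>j\<in>J'. S j \<omega> = s j}"
      unfolding J0_def using prod.remove[OF less.prems(1) NJ, of "\<lambda>j. prob {\<omega>\<in>space M. T j \<omega> = t j}"] by simp
    finally show ?thesis .
  qed
qed

lemma FWD_T:
  assumes "finite J" "J \<subseteq> {m. n \<le> m \<and> enat (Suc m) < \<tau>}"
  shows "prob {\<omega>\<in>space M. \<forall>j\<in>J. T j \<omega> = t j} = (\<Prod>j\<in>J. prob {\<omega>\<in>space M. T j \<omega> = t j})"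
  using FWD_IND[OF assms, of "{}" t] by (simp add: prob_space)

end

lemma all_insert_upd: "N \<notin> F \<Longrightarrow> (\<forall>m\<in>insert N F. f m = (l(N:=x)) m) \<longleftrightarrow> (\<forall>m\<in>F. f m = l m) \<and> f N = x"
  by auto

context gset begin

abbreviation XI where "XI n \<omega> \<equiv> Xi X (E \<omega>) n"

lemma XI_eq: "XI n \<omega> = Xi X (L n \<omega>) n" by (rule Xi_layer)

lemma dv_XI: "enat (Suc n) < \<tau> \<Longrightarrow> dv (XI n)"
  by (rule dv_cong[OF dv_comp[OF dv_L]]) (simp_all add: XI_eq)

definition repX :: "nat \<Rightarrow> vert set set \<Rightarrow> edge set" where "repX n \<xi> = (SOME l. vl X n l \<and> Xi X l n = \<xi>)"
definition phiX :: "nat \<Rightarrow> edge set \<Rightarrow> vert set set \<Rightarrow> real" where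
  "phiX n t \<xi> = real (card {p. p permutes Vg X n \<and> map_prod p id ` repX n \<xi> = t})"
definition hX :: "nat \<Rightarrow> edge set \<Rightarrow> (vert \<Rightarrow> vert) \<Rightarrow> edge set \<Rightarrow> real" where
  "hX n t s' l = real (card {p. p permutes Vg X n \<and> map_prod p s' ` l = t})"

lemma hX_phi: assumes l: "vl X n l" and s': "s' permutes Vg X (Suc n)"
  shows "hX n t s' l = phiX n t ((\<lambda>B. s' ` B) ` Xi X l n)"
proof -
  define l1 where "l1 = map_prod id s' ` l"
  have v1: "vl X n l1" unfolding l1_def by (rule vl_perm2[OF l s'])
  have x1: "Xi X l1 n = (\<lambda>B. s' ` B) ` Xi X l n" unfolding l1_def by (rule Xi_perm[OF s'])
  define r where "r = repX n (Xi X l1 n)"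
  have "vl X n r \<and> Xi X r n = Xi X l1 n" unfolding r_def repX_def by (rule someI[of _ l1]) (simp add: v1)
  then obtain \<rho> where \<rho>: "\<rho> permutes Vg X n" "map_prod \<rho> id ` r = l1" using BC[of X n r l1] v1 by blast
  have e: "map_prod p s' ` l = map_prod (p \<circ> \<rho>) id ` r" for p
  proof -
    have "map_prod p s' ` l = map_prod p id ` l1" unfolding l1_def by (rule mp_split(2))
    also have "\<dots> = map_prod p id ` (map_prod \<rho> id ` r)" using \<rho>(2) by simp
    also have "\<dots> = map_prod (p \<circ> \<rho>) id ` r" by (simp add: image_comp map_prod.comp)
    finally show ?thesis .
  qed
  have "hX n t s' l = real (card {p. p permutes Vg X n \<and> map_prod (p \<circ> \<rho>) id ` r = t})"
    unfolding hX_def e ..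
  also have "\<dots> = real (card {p. p permutes Vg X n \<and> map_prod p id ` r = t})"
    using card_perm_comp[OF \<rho>(1), of "\<lambda>q. map_prod q id ` r = t"] by simp
  also have "\<dots> = phiX n t (Xi X l1 n)" unfolding phiX_def r_def ..
  finally show ?thesis using x1 by simp
qed

end

locale gB = gset + assumes bn: "backward_neutral M \<tau> X E"
begin

lemma bn_exch: assumes "enat (Suc n) < \<tau>" "\<pi> permutes Vg X (Suc n)"
  shows "distr M (count_space UNIV) (XI n) = distr M (count_space UNIV) (\<lambda>\<omega>. (\<lambda>B. \<pi> ` B) ` XI n \<omega>)"
  using bn assms unfolding backward_neutral_def by blast

lemma bn_indep: assumes "enat (Suc n) < \<tau>"
  shows "indep_rv M (count_space UNIV) (XI n) (PiM {m. n < m \<and> enat (Suc m) < \<tau>} (\<lambda>_. count_space UNIV))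
     (\<lambda>\<omega>. \<lambda>m\<in>{m. n < m \<and> enat (Suc m) < \<tau>}. L m \<omega>)"
  using bn assms unfolding backward_neutral_def by blast

lemma exch_intX: assumes n: "enat (Suc n) < \<tau>" and q: "\<pi> permutes Vg X (Suc n)"
  shows "integral\<^sup>L M (\<lambda>\<omega>. g ((\<lambda>B. \<pi> ` B) ` XI n \<omega>)) = integral\<^sup>L M (\<lambda>\<omega>. (g (XI n \<omega>) :: real))"
proof -
  have m1: "(\<lambda>\<omega>. (\<lambda>B. \<pi> ` B) ` XI n \<omega>) \<in> M \<rightarrow>\<^sub>M count_space UNIV" using dv_meas[OF dv_comp[OF dv_XI[OF n]]] .
  have m2: "XI n \<in> M \<rightarrow>\<^sub>M count_space UNIV" using dv_meas[OF dv_XI[OF n]] .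
  have "integral\<^sup>L M (\<lambda>\<omega>. g ((\<lambda>B. \<pi> ` B) ` XI n \<omega>)) = integral\<^sup>L (distr M (count_space UNIV) (\<lambda>\<omega>. (\<lambda>B. \<pi> ` B) ` XI n \<omega>)) g"
    by (rule integral_distr[OF m1, symmetric]) (rule borel_measurable_count_space)
  also have "\<dots> = integral\<^sup>L (distr M (count_space UNIV) (XI n)) g" using bn_exch[OF n q] by simp
  also have "\<dots> = integral\<^sup>L M (\<lambda>\<omega>. g (XI n \<omega>))"
    by (rule integral_distr[OF m2]) (rule borel_measurable_count_space)
  finally show ?thesis .
qed

definition HvalB where "HvalB N t = integral\<^sup>L M (\<lambda>\<omega>. phiX N t (XI N \<omega>))"

lemma dv_WB: assumes N: "enat (Suc N) < \<tau>"
  shows "dv (\<lambda>\<omega>. (\<lambda>m\<in>{m. N < m \<and> m \<le> Mx \<and> enat (Suc m) < \<tau>}. L m \<omega>, \<lambda>m\<in>{m. N < m \<and> m \<le> Mx \<and> enat m < \<tau>}. S m \<omega>))"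
proof (rule dv_pair; rule dv_restrict)
  show "finite {m. N < m \<and> m \<le> Mx \<and> enat (Suc m) < \<tau>}" by (rule finite_subset[of _ "{..Mx}"]) auto
  show "finite {m. N < m \<and> m \<le> Mx \<and> enat m < \<tau>}" by (rule finite_subset[of _ "{..Mx}"]) auto
qed (auto intro: dv_L dv_S)

lemma KBpt:
  assumes N: "enat (Suc N) < \<tau>" and Mx: "Suc N \<le> Mx"
  defines "FB \<equiv> {m. N < m \<and> m \<le> Mx \<and> enat (Suc m) < \<tau>}" and "GB \<equiv> {m. N < m \<and> m \<le> Mx \<and> enat m < \<tau>}"
  shows "prob ({\<omega>\<in>space M. T N \<omega> = t} \<inter> {\<omega>\<in>space M. (\<lambda>m\<in>FB. L m \<omega>, \<lambda>m\<in>GB. S m \<omega>) = w}) =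
     HvalB N t / real (card (PS N)) * prob {\<omega>\<in>space M. (\<lambda>m\<in>FB. L m \<omega>, \<lambda>m\<in>GB. S m \<omega>) = w}"
proof -
  obtain l s where w: "w = (l, s)" by (cases w)
  have finFB: "finite FB" unfolding FB_def by (rule finite_subset[of _ "{..Mx}"]) auto
  have finGB: "finite GB" unfolding GB_def by (rule finite_subset[of _ "{..Mx}"]) auto
  have NF: "N \<notin> FB" "N \<notin> GB" unfolding FB_def GB_def by auto
  have SG: "Suc N \<in> GB" unfolding GB_def using N Mx by auto
  show ?thesis
  proof (cases "l \<in> extensional FB \<and> s \<in> extensional GB")
    case False
    then have e: "{\<omega>\<in>space M. (\<lambda>m\<in>FB. L m \<omega>, \<lambda>m\<in>GB. S m \<omega>) = w} = {}" unfolding w by auto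
    show ?thesis unfolding e by simp
  next
    case True
    define Ev where "Ev = {\<omega>\<in>space M. (\<forall>m\<in>FB. L m \<omega> = l m) \<and> (\<forall>m\<in>GB. S m \<omega> = s m)}"
    have evW: "{\<omega>\<in>space M. (\<lambda>m\<in>FB. L m \<omega>, \<lambda>m\<in>GB. S m \<omega>) = w} = Ev"
      unfolding w Ev_def using True by (simp add: restr_eq)
    define B0 where "B0 = {\<omega>\<in>space M. \<forall>m\<in>FB. L m \<omega> = l m}"
    define Pi where "Pi = (\<Prod>m\<in>GB. prob {\<omega>\<in>space M. S m \<omega> = s m})"
    define PS0 where "PS0 = PS N"
    have N0: "enat N < \<tau>" using enat_Suc_lt[OF N] .
    have Fs: "FB \<subseteq> {n. enat (Suc n) < \<tau>}" unfolding FB_def by auto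
    have Gs: "GB \<subseteq> {n. enat n < \<tau>}" unfolding GB_def by auto
    have Fs': "insert N FB \<subseteq> {n. enat (Suc n) < \<tau>}" using Fs N by auto
    have Gs': "insert N GB \<subseteq> {n. enat n < \<tau>}" using Gs N0 by auto
    have pEv: "prob Ev = prob B0 * Pi" unfolding Ev_def B0_def Pi_def by (rule H1[OF finFB Fs finGB Gs])
    have B0ev: "B0 \<in> events" unfolding B0_def using Fs finFB by (intro ev_all dv_L) auto
    have Sev: "{\<omega>\<in>space M. \<forall>m\<in>GB. S m \<omega> = s m} \<in> events" using Gs finGB by (intro ev_all dv_S) auto
    have "Ev = B0 \<inter> {\<omega>\<in>space M. \<forall>m\<in>GB. S m \<omega> = s m}" unfolding Ev_def B0_def by auto
    then have Ev_ev: "Ev \<in> events" using B0ev Sev by simp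
    have Tev: "{\<omega>\<in>space M. T N \<omega> = t} \<in> events" by (rule dv_ev[OF dv_T[OF N]])
    have dvY: "dv (\<lambda>\<omega>. (L N \<omega>, S N \<omega>))" by (rule dv_pair[OF dv_L[OF N] dv_S[OF N0]])
    have Yin: "(L N \<omega>, S N \<omega>) \<in> LR N \<times> PS0" if "\<omega> \<in> space M" for \<omega>
      using L_LR S_PS[OF that N0] unfolding PS0_def by simp
    have tp: "prob ({\<omega>\<in>space M. T N \<omega> = t} \<inter> Ev) =
      (\<Sum>y\<in>LR N \<times> PS0. prob (({\<omega>\<in>space M. T N \<omega> = t} \<inter> Ev) \<inter> {\<omega>\<in>space M. (L N \<omega>, S N \<omega>) = y}))"
      by (rule total_prob[OF _ Yin dv_ev[OF dvY]]) (auto simp: PS0_def intro: Tev Ev_ev)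
    have split: "({\<omega>\<in>space M. T N \<omega> = t} \<inter> Ev) \<inter> {\<omega>\<in>space M. (L N \<omega>, S N \<omega>) = (lam, p)} =
       (if map_prod p (s (Suc N)) ` lam = t then {\<omega>\<in>space M. (\<forall>m\<in>insert N FB. L m \<omega> = (l(N:=lam)) m) \<and> (\<forall>m\<in>insert N GB. S m \<omega> = (s(N:=p)) m)} else {})" for lam p
    proof (cases "map_prod p (s (Suc N)) ` lam = t")
      case True
      show ?thesis unfolding if_P[OF True] all_insert_upd[OF NF(1)] all_insert_upd[OF NF(2)] Ev_def
        using True SG by (auto simp: T_def')
    next
      case False
      show ?thesis unfolding if_not_P[OF False] Ev_def
        using False SG by (auto simp: T_def')
    qed
    have trm: "prob (({\<omega>\<in>space M. T N \<omega> = t} \<inter> Ev) \<inter> {\<omega>\<in>space M. (L N \<omega>, S N \<omega>) = (lam, p)}) =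
       (if map_prod p (s (Suc N)) ` lam = t then prob (B0 \<inter> {\<omega>\<in>space M. L N \<omega> = lam}) * (Pi * prob {\<omega>\<in>space M. S N \<omega> = p}) else 0)" for lam p
    proof (cases "map_prod p (s (Suc N)) ` lam = t")
      case True
      have "prob {\<omega>\<in>space M. (\<forall>m\<in>insert N FB. L m \<omega> = (l(N:=lam)) m) \<and> (\<forall>m\<in>insert N GB. S m \<omega> = (s(N:=p)) m)} =
        prob {\<omega>\<in>space M. \<forall>m\<in>insert N FB. L m \<omega> = (l(N:=lam)) m} * (\<Prod>m\<in>insert N GB. prob {\<omega>\<in>space M. S m \<omega> = (s(N:=p)) m})"
        by (rule H1[OF _ Fs' _ Gs']) (simp_all add: finFB finGB)
      also have "{\<omega>\<in>space M. \<forall>m\<in>insert N FB. L m \<omega> = (l(N:=lam)) m} = B0 \<inter> {\<omega>\<in>space M. L N \<omega> = lam}"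
        unfolding all_insert_upd[OF NF(1)] B0_def by auto
      also have "(\<Prod>m\<in>insert N GB. prob {\<omega>\<in>space M. S m \<omega> = (s(N:=p)) m}) = Pi * prob {\<omega>\<in>space M. S N \<omega> = p}"
      proof -
        have "(\<Prod>m\<in>GB. prob {\<omega>\<in>space M. S m \<omega> = (s(N:=p)) m}) = Pi"
          unfolding Pi_def by (rule prod.cong) (use NF in auto)
        then show ?thesis using finGB NF by (simp add: prod.insert)
      qed
      finally show ?thesis unfolding split using True by simp
    next
      case False
      show ?thesis unfolding split using False by simp
    qed
    have inner: "(\<Sum>p\<in>PS0. if map_prod p (s (Suc N)) ` lam = t then prob (B0 \<inter> {\<omega>\<in>space M. L N \<omega> = lam}) * (Pi * prob {\<omega>\<in>space M. S N \<omega> = p}) else 0) =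
       Pi / real (card PS0) * (hX N t (s (Suc N)) lam * prob (B0 \<inter> {\<omega>\<in>space M. L N \<omega> = lam}))" for lam
    proof -
      have "(\<Sum>p\<in>PS0. if map_prod p (s (Suc N)) ` lam = t then prob (B0 \<inter> {\<omega>\<in>space M. L N \<omega> = lam}) * (Pi * prob {\<omega>\<in>space M. S N \<omega> = p}) else 0) =
        (\<Sum>p\<in>PS0. if map_prod p (s (Suc N)) ` lam = t then prob (B0 \<inter> {\<omega>\<in>space M. L N \<omega> = lam}) * (Pi * (1 / real (card PS0))) else 0)"
        by (rule sum.cong[OF refl]) (simp add: prob_S[OF N0] PS0_def)
      also have "\<dots> = prob (B0 \<inter> {\<omega>\<in>space M. L N \<omega> = lam}) * (Pi * (1 / real (card PS0))) * real (card {p\<in>PS0. map_prod p (s (Suc N)) ` lam = t})"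
        by (rule sum_if_card) (simp add: PS0_def)
      also have "{p\<in>PS0. map_prod p (s (Suc N)) ` lam = t} = {p. p permutes Vg X N \<and> map_prod p (s (Suc N)) ` lam = t}"
        unfolding PS0_def PS_def by simp
      finally show ?thesis unfolding hX_def by simp
    qed
    have "prob ({\<omega>\<in>space M. T N \<omega> = t} \<inter> Ev) = (\<Sum>lam\<in>LR N. \<Sum>p\<in>PS0.
        if map_prod p (s (Suc N)) ` lam = t then prob (B0 \<inter> {\<omega>\<in>space M. L N \<omega> = lam}) * (Pi * prob {\<omega>\<in>space M. S N \<omega> = p}) else 0)"
      unfolding tp sum.cartesian_product
    proof (rule sum.cong[OF refl])
      fix y :: "edge set \<times> (vert \<Rightarrow> vert)"
      obtain a b where y: "y = (a, b)" by (cases y)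
      show "prob (({\<omega>\<in>space M. T N \<omega> = t} \<inter> Ev) \<inter> {\<omega>\<in>space M. (L N \<omega>, S N \<omega>) = y}) =
        (case y of (lam, p) \<Rightarrow> if map_prod p (s (Suc N)) ` lam = t then prob (B0 \<inter> {\<omega>\<in>space M. L N \<omega> = lam}) * (Pi * prob {\<omega>\<in>space M. S N \<omega> = p}) else 0)"
        unfolding y case_prod_conv by (rule trm)
    qed
    also have "\<dots> = Pi / real (card PS0) * (\<Sum>lam\<in>LR N. hX N t (s (Suc N)) lam * prob (B0 \<inter> {\<omega>\<in>space M. L N \<omega> = lam}))"
      unfolding inner sum_distrib_left ..
    also have "(\<Sum>lam\<in>LR N. hX N t (s (Suc N)) lam * prob (B0 \<inter> {\<omega>\<in>space M. L N \<omega> = lam})) =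
        integral\<^sup>L M (\<lambda>\<omega>. indicator B0 \<omega> * hX N t (s (Suc N)) (L N \<omega>))"
      by (rule GI[symmetric, OF LR_fin L_LR dv_ev[OF dv_L[OF N]] B0ev])
    finally have main: "prob ({\<omega>\<in>space M. T N \<omega> = t} \<inter> Ev) = Pi / real (card PS0) * integral\<^sup>L M (\<lambda>\<omega>. indicator B0 \<omega> * hX N t (s (Suc N)) (L N \<omega>))" .
    have "prob ({\<omega>\<in>space M. T N \<omega> = t} \<inter> Ev) = HvalB N t / real (card PS0) * prob Ev"
    proof (cases "s (Suc N) \<in> PS (Suc N)")
      case True
      have sp: "s (Suc N) permutes Vg X (Suc N)" using True unfolding PS_def by simp
      let ?g = "\<lambda>\<xi>. phiX N t ((\<lambda>B. s (Suc N) ` B) ` \<xi>)"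
      have "integral\<^sup>L M (\<lambda>\<omega>. indicator B0 \<omega> * hX N t (s (Suc N)) (L N \<omega>)) =
          integral\<^sup>L M (\<lambda>\<omega>. indicator B0 \<omega> * ?g (XI N \<omega>))"
        by (rule Bochner_Integration.integral_cong[OF refl]) (simp add: XI_eq hX_phi[OF L_vl[OF _ N] sp])
      also have "\<dots> = prob B0 * integral\<^sup>L M (\<lambda>\<omega>. ?g (XI N \<omega>))"
        unfolding B0_def by (rule indep_rv_cyl2[OF bn_indep[OF N] dv_XI[OF N]]) (auto simp: FB_def finFB[unfolded FB_def])
      also have "integral\<^sup>L M (\<lambda>\<omega>. ?g (XI N \<omega>)) = HvalB N t"
        unfolding HvalB_def using exch_intX[OF N sp] by simp
      finally show ?thesis using main pEv by simp
    next
      case False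
      have "prob {\<omega>\<in>space M. S (Suc N) \<omega> = s (Suc N)} = 0" using prob_S[OF N] False by simp
      then have "Pi = 0" unfolding Pi_def using finGB SG by (intro prod_zero bexI[of _ "Suc N"]) auto
      then show ?thesis using main pEv by simp
    qed
    then show ?thesis unfolding evW[symmetric] PS0_def .
  qed
qed

lemma KB:
  assumes N: "enat (Suc N) < \<tau>" and Mx: "Suc N \<le> Mx"
  shows "prob {\<omega>\<in>space M. T N \<omega> = t \<and> (\<lambda>m\<in>{m. N < m \<and> m \<le> Mx \<and> enat (Suc m) < \<tau>}. L m \<omega>, \<lambda>m\<in>{m. N < m \<and> m \<le> Mx \<and> enat m < \<tau>}. S m \<omega>) \<in> A} =
    prob {\<omega>\<in>space M. T N \<omega> = t} * prob {\<omega>\<in>space M. (\<lambda>m\<in>{m. N < m \<and> m \<le> Mx \<and> enat (Suc m) < \<tau>}. L m \<omega>, \<lambda>m\<in>{m. N < m \<and> m \<le> Mx \<and> enat m < \<tau>}. S m \<omega>) \<in> A}"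
proof -
  let ?c = "HvalB N t / real (card (PS N))"
  let ?W = "\<lambda>\<omega>. (\<lambda>m\<in>{m. N < m \<and> m \<le> Mx \<and> enat (Suc m) < \<tau>}. L m \<omega>, \<lambda>m\<in>{m. N < m \<and> m \<le> Mx \<and> enat m < \<tau>}. S m \<omega>)"
  have gen: "prob {\<omega>\<in>space M. T N \<omega> = t \<and> ?W \<omega> \<in> B} = ?c * prob {\<omega>\<in>space M. ?W \<omega> \<in> B}" for B
    by (rule dist_from_point[OF KBpt[OF N Mx] dv_WB[OF N] dv_ev[OF dv_T[OF N]]])
  have "prob {\<omega>\<in>space M. T N \<omega> = t} = ?c"
    using gen[of UNIV] by (simp add: prob_space)
  then show ?thesis using gen[of A] by simp
qed

end

context gB begin

lemma BWD_IND:
  assumes "finite J" "J \<subseteq> {m. m < n \<and> enat (Suc m) < \<tau>}" "finite J'" "J' \<subseteq> {m. n \<le> m \<and> enat m < \<tau>}"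
  shows "prob {\<omega>\<in>space M. (\<forall>j\<in>J. T j \<omega> = t j) \<and> (\<forall>j\<in>J'. S j \<omega> = s j)} =
    (\<Prod>j\<in>J. prob {\<omega>\<in>space M. T j \<omega> = t j}) * prob {\<omega>\<in>space M. \<forall>j\<in>J'. S j \<omega> = s j}"
  using assms
proof (induction "card J" arbitrary: J rule: less_induct)
  case less
  show ?case
  proof (cases "J = {}")
    case True then show ?thesis by simp
  next
    case False
    define N where "N = Min J"
    have NJ: "N \<in> J" unfolding N_def using Min_in[OF less.prems(1) False] .
    have N: "enat (Suc N) < \<tau>" "N < n" using NJ less.prems(2) by auto
    define J0 where "J0 = J - {N}"
    have J0: "finite J0" "J0 \<subseteq> {m. m < n \<and> enat (Suc m) < \<tau>}" "card J0 < card J"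
      unfolding J0_def using less.prems(1,2) NJ card_Diff1_less[OF less.prems(1) NJ] by auto
    have J0N: "N < j" if "j \<in> J0" for j
    proof -
      have "N \<le> j" using that unfolding J0_def N_def using Min_le[OF less.prems(1)] by auto
      then show ?thesis using that unfolding J0_def by auto
    qed
    define Mx where "Mx = Max (insert (Suc N) (Suc ` J \<union> J'))"
    have finMx: "finite (insert (Suc N) (Suc ` J \<union> J'))" using less.prems(1,3) by simp
    have MxJ: "Suc j \<le> Mx" if "j \<in> J" for j unfolding Mx_def using that by (intro Max_ge[OF finMx]) auto
    have MxJ': "j \<le> Mx" if "j \<in> J'" for j unfolding Mx_def using that by (intro Max_ge[OF finMx]) auto
    have MxN: "Suc N \<le> Mx" unfolding Mx_def by (intro Max_ge[OF finMx]) auto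
    define FB where "FB = {m. N < m \<and> m \<le> Mx \<and> enat (Suc m) < \<tau>}"
    define GB where "GB = {m. N < m \<and> m \<le> Mx \<and> enat m < \<tau>}"
    have J0F: "j \<in> FB" "j \<in> GB" "Suc j \<in> GB" if j: "j \<in> J0" for j
    proof -
      have jJ: "j \<in> J" using j unfolding J0_def by auto
      have a: "N < j" using J0N[OF j] .
      have b: "Suc j \<le> Mx" using MxJ[OF jJ] .
      have c: "enat (Suc j) < \<tau>" using jJ less.prems(2) by auto
      show "j \<in> FB" "j \<in> GB" "Suc j \<in> GB" unfolding FB_def GB_def using a b c enat_Suc_lt[OF c] by auto
    qed
    have J'G: "j \<in> GB" if j: "j \<in> J'" for j
      unfolding GB_def using j less.prems(4) N(2) MxJ'[OF j] by auto
    define A where "A = {(l, s'). (\<forall>j\<in>J0. map_prod (s' j) (s' (Suc j)) ` l j = t j) \<and> (\<forall>j\<in>J'. s' j = s j)}"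
    have eqW: "(\<lambda>m\<in>FB. L m \<omega>, \<lambda>m\<in>GB. S m \<omega>) \<in> A \<longleftrightarrow> (\<forall>j\<in>J0. T j \<omega> = t j) \<and> (\<forall>j\<in>J'. S j \<omega> = s j)" for \<omega>
    proof -
      have "(\<forall>j\<in>J0. map_prod ((\<lambda>m\<in>GB. S m \<omega>) j) ((\<lambda>m\<in>GB. S m \<omega>) (Suc j)) ` ((\<lambda>m\<in>FB. L m \<omega>) j) = t j)
          \<longleftrightarrow> (\<forall>j\<in>J0. T j \<omega> = t j)"
      proof (intro ball_cong refl)
        fix j assume j: "j \<in> J0"
        show "map_prod ((\<lambda>m\<in>GB. S m \<omega>) j) ((\<lambda>m\<in>GB. S m \<omega>) (Suc j)) ` ((\<lambda>m\<in>FB. L m \<omega>) j) = t j \<longleftrightarrow> T j \<omega> = t j"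
          using J0F[OF j] by (simp add: T_def')
      qed
      moreover have "(\<forall>j\<in>J'. (\<lambda>m\<in>GB. S m \<omega>) j = s j) \<longleftrightarrow> (\<forall>j\<in>J'. S j \<omega> = s j)"
        using J'G by auto
      ultimately show ?thesis unfolding A_def by simp
    qed
    have "prob {\<omega>\<in>space M. (\<forall>j\<in>J. T j \<omega> = t j) \<and> (\<forall>j\<in>J'. S j \<omega> = s j)} =
        prob {\<omega>\<in>space M. T N \<omega> = t N \<and> (\<lambda>m\<in>FB. L m \<omega>, \<lambda>m\<in>GB. S m \<omega>) \<in> A}"
    proof -
      have "J = insert N J0" unfolding J0_def using NJ by auto
      then have "{\<omega>\<in>space M. (\<forall>j\<in>J. T j \<omega> = t j) \<and> (\<forall>j\<in>J'. S j \<omega> = s j)} =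
          {\<omega>\<in>space M. T N \<omega> = t N \<and> (\<lambda>m\<in>FB. L m \<omega>, \<lambda>m\<in>GB. S m \<omega>) \<in> A}"
        unfolding eqW by auto
      then show ?thesis by simp
    qed
    also have "\<dots> = prob {\<omega>\<in>space M. T N \<omega> = t N} * prob {\<omega>\<in>space M. (\<lambda>m\<in>FB. L m \<omega>, \<lambda>m\<in>GB. S m \<omega>) \<in> A}"
      unfolding FB_def GB_def by (rule KB[OF N(1) MxN])
    also have "prob {\<omega>\<in>space M. (\<lambda>m\<in>FB. L m \<omega>, \<lambda>m\<in>GB. S m \<omega>) \<in> A} =
        prob {\<omega>\<in>space M. (\<forall>j\<in>J0. T j \<omega> = t j) \<and> (\<forall>j\<in>J'. S j \<omega> = s j)}"
      unfolding eqW ..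
    also have "\<dots> = (\<Prod>j\<in>J0. prob {\<omega>\<in>space M. T j \<omega> = t j}) * prob {\<omega>\<in>space M. \<forall>j\<in>J'. S j \<omega> = s j}"
      by (rule less.hyps[OF J0(3) J0(1) J0(2) less.prems(3) less.prems(4)])
    also have "prob {\<omega>\<in>space M. T N \<omega> = t N} * ((\<Prod>j\<in>J0. prob {\<omega>\<in>space M. T j \<omega> = t j}) * prob {\<omega>\<in>space M. \<forall>j\<in>J'. S j \<omega> = s j})
       = (\<Prod>j\<in>J. prob {\<omega>\<in>space M. T j \<omega> = t j}) * prob {\<omega>\<in>space M. \<forall>j\<in>J'. S j \<omega> = s j}"
      unfolding J0_def using prod.remove[OF less.prems(1) NJ, of "\<lambda>j. prob {\<omega>\<in>space M. T j \<omega> = t j}"] by simp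
    finally show ?thesis .
  qed
qed

lemma BWD_T:
  assumes "finite J" "J \<subseteq> {m. enat (Suc m) < \<tau>}"
  shows "prob {\<omega>\<in>space M. \<forall>j\<in>J. T j \<omega> = t j} = (\<Prod>j\<in>J. prob {\<omega>\<in>space M. T j \<omega> = t j})"
proof -
  have "J \<subseteq> {m. m < Suc (Max (insert 0 J)) \<and> enat (Suc m) < \<tau>}"
    using assms by (auto simp: less_Suc_eq_le)
  from BWD_IND[OF assms(1) this, of "{}" t] show ?thesis by (simp add: prob_space)
qed

end

context prob_space begin
lemma DEQ:
  assumes Y: "dv Y" and Z: "dv Z" and eq: "\<And>y. prob {\<omega>\<in>space M. Y \<omega> = y} = prob {\<omega>\<in>space M. Z \<omega> = y}"
  shows "distr M (count_space UNIV) Y = distr M (count_space UNIV) Z"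
proof (rule measure_eqI)
  show "sets (distr M (count_space UNIV) Y) = sets (distr M (count_space UNIV) Z)" by simp
  fix A assume "A \<in> sets (distr M (count_space UNIV) Y)"
  obtain R1 where R1: "finite R1" "\<And>\<omega>. \<omega>\<in>space M \<Longrightarrow> Y \<omega> \<in> R1" using dv_range[OF Y] by blast
  obtain R2 where R2: "finite R2" "\<And>\<omega>. \<omega>\<in>space M \<Longrightarrow> Z \<omega> \<in> R2" using dv_range[OF Z] by blast
  have key: "prob (W -` A \<inter> space M) = (\<Sum>y\<in>R1 \<union> R2. if y \<in> A then prob {\<omega>\<in>space M. W \<omega> = y} else 0)"
    if W: "dv W" "\<And>\<omega>. \<omega>\<in>space M \<Longrightarrow> W \<omega> \<in> R1 \<union> R2" for W :: "'a \<Rightarrow> 'b"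
  proof -
    have "prob (W -` A \<inter> space M) = (\<Sum>y\<in>R1 \<union> R2. prob ((W -` A \<inter> space M) \<inter> {\<omega>\<in>space M. W \<omega> = y}))"
      by (rule total_prob[OF _ W(2) dv_ev[OF W(1)] dv_vimage[OF W(1)]]) (simp add: R1 R2)
    also have "\<dots> = (\<Sum>y\<in>R1 \<union> R2. if y \<in> A then prob {\<omega>\<in>space M. W \<omega> = y} else 0)"
    proof (rule sum.cong[OF refl])
      fix y show "prob ((W -` A \<inter> space M) \<inter> {\<omega>\<in>space M. W \<omega> = y}) = (if y \<in> A then prob {\<omega>\<in>space M. W \<omega> = y} else 0)"
      proof (cases "y \<in> A")
        case True
        then have "(W -` A \<inter> space M) \<inter> {\<omega>\<in>space M. W \<omega> = y} = {\<omega>\<in>space M. W \<omega> = y}" by auto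
        then show ?thesis using True by simp
      next
        case False
        then have "(W -` A \<inter> space M) \<inter> {\<omega>\<in>space M. W \<omega> = y} = {}" by auto
        then show ?thesis using False by simp
      qed
    qed
    finally show ?thesis .
  qed
  have "emeasure (distr M (count_space UNIV) Y) A = emeasure M (Y -` A \<inter> space M)"
    by (rule emeasure_distr[OF dv_meas[OF Y]]) simp
  also have "\<dots> = ennreal (prob (Y -` A \<inter> space M))" by (simp add: emeasure_eq_measure)
  also have "prob (Y -` A \<inter> space M) = prob (Z -` A \<inter> space M)"
  proof -
    have "(\<Sum>y\<in>R1 \<union> R2. if y \<in> A then prob {\<omega>\<in>space M. Y \<omega> = y} else 0) =
       (\<Sum>y\<in>R1 \<union> R2. if y \<in> A then prob {\<omega>\<in>space M. Z \<omega> = y} else 0)"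
      by (rule sum.cong[OF refl]) (simp only: eq)
    then show ?thesis using key[of Y] key[of Z] Y Z R1 R2 by simp
  qed
  also have "ennreal (prob (Z -` A \<inter> space M)) = emeasure M (Z -` A \<inter> space M)" by (simp add: emeasure_eq_measure)
  also have "\<dots> = emeasure (distr M (count_space UNIV) Z) A"
    by (rule emeasure_distr[OF dv_meas[OF Z], symmetric]) simp
  finally show "emeasure (distr M (count_space UNIV) Y) A = emeasure (distr M (count_space UNIV) Z) A" .
qed
end

lemma perm_comp_bij: assumes p: "\<pi> permutes A" shows "bij_betw (\<lambda>p. \<pi> \<circ> p) {p. p permutes A} {p. p permutes A}"
proof (rule bij_betw_byWitness[where f'="\<lambda>p. inv \<pi> \<circ> p"])
  show "\<forall>a\<in>{p. p permutes A}. inv \<pi> \<circ> (\<pi> \<circ> a) = a" using permutes_inverses(2)[OF p] by (auto simp: fun_eq_iff)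
  show "\<forall>a\<in>{p. p permutes A}. \<pi> \<circ> (inv \<pi> \<circ> a) = a" using permutes_inverses(1)[OF p] by (auto simp: fun_eq_iff)
  show "(\<lambda>p. \<pi> \<circ> p) ` {p. p permutes A} \<subseteq> {p. p permutes A}" using permutes_compose[OF _ p] by auto
  show "(\<lambda>p. inv \<pi> \<circ> p) ` {p. p permutes A} \<subseteq> {p. p permutes A}" using permutes_compose[OF _ permutes_inv[OF p]] by auto
qed

context gset begin

lemma pr3: assumes n: "enat (Suc n) < \<tau>" and p: "p \<in> PS n" and p': "p' \<in> PS (Suc n)"
  shows "prob {\<omega>\<in>space M. (L n \<omega>, S n \<omega>, S (Suc n) \<omega>) = (lam, p, p')} =
    prob {\<omega>\<in>space M. L n \<omega> = lam} * (1 / real (card (PS n)) * (1 / real (card (PS (Suc n)))))"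
proof -
  have n0: "enat n < \<tau>" using enat_Suc_lt[OF n] .
  define sf where "sf = (\<lambda>m. if m = n then p else p')"
  have "prob {\<omega>\<in>space M. (\<forall>m\<in>{n}. L m \<omega> = (\<lambda>_. lam) m) \<and> (\<forall>m\<in>{n, Suc n}. S m \<omega> = sf m)} =
    prob {\<omega>\<in>space M. \<forall>m\<in>{n}. L m \<omega> = (\<lambda>_. lam) m} * (\<Prod>m\<in>{n, Suc n}. prob {\<omega>\<in>space M. S m \<omega> = sf m})"
    by (rule H1) (use n n0 in auto)
  moreover have "{\<omega>\<in>space M. (\<forall>m\<in>{n}. L m \<omega> = (\<lambda>_. lam) m) \<and> (\<forall>m\<in>{n, Suc n}. S m \<omega> = sf m)} =
      {\<omega>\<in>space M. (L n \<omega>, S n \<omega>, S (Suc n) \<omega>) = (lam, p, p')}" unfolding sf_def by auto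
  moreover have "(\<Prod>m\<in>{n, Suc n}. prob {\<omega>\<in>space M. S m \<omega> = sf m}) = 1 / real (card (PS n)) * (1 / real (card (PS (Suc n))))"
    unfolding sf_def using prob_S[OF n0] prob_S[OF n] p p' by simp
  ultimately show ?thesis by simp
qed

lemma T_sum: assumes n: "enat (Suc n) < \<tau>"
  shows "prob {\<omega>\<in>space M. F (T n \<omega>) = y} = (\<Sum>x\<in>LR n \<times> PS n \<times> PS (Suc n). case x of (lam, p, p') \<Rightarrow>
    if F (map_prod p p' ` lam) = y then prob {\<omega>\<in>space M. L n \<omega> = lam} * (1 / real (card (PS n)) * (1 / real (card (PS (Suc n))))) else 0)"
proof -
  have n0: "enat n < \<tau>" using enat_Suc_lt[OF n] .
  have dvY: "dv (\<lambda>\<omega>. (L n \<omega>, S n \<omega>, S (Suc n) \<omega>))" by (intro dv_pair dv_L dv_S n n0)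
  have Yin: "(L n \<omega>, S n \<omega>, S (Suc n) \<omega>) \<in> LR n \<times> PS n \<times> PS (Suc n)" if "\<omega> \<in> space M" for \<omega>
    using L_LR S_PS[OF that n0] S_PS[OF that n] by simp
  have "prob {\<omega>\<in>space M. F (T n \<omega>) = y} = (\<Sum>x\<in>LR n \<times> PS n \<times> PS (Suc n). prob ({\<omega>\<in>space M. F (T n \<omega>) = y} \<inter> {\<omega>\<in>space M. (L n \<omega>, S n \<omega>, S (Suc n) \<omega>) = x}))"
    by (rule total_prob[OF _ Yin dv_ev[OF dvY] dv_Collect[OF dv_T[OF n]]]) simp
  also have "\<dots> = (\<Sum>x\<in>LR n \<times> PS n \<times> PS (Suc n). case x of (lam, p, p') \<Rightarrow>
    if F (map_prod p p' ` lam) = y then prob {\<omega>\<in>space M. L n \<omega> = lam} * (1 / real (card (PS n)) * (1 / real (card (PS (Suc n))))) else 0)"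
  proof (rule sum.cong[OF refl])
    fix x assume x: "x \<in> LR n \<times> PS n \<times> PS (Suc n)"
    obtain lam p p' where xe: "x = (lam, p, p')" by (cases x)
    have pp: "p \<in> PS n" "p' \<in> PS (Suc n)" using x xe by auto
    show "prob ({\<omega>\<in>space M. F (T n \<omega>) = y} \<inter> {\<omega>\<in>space M. (L n \<omega>, S n \<omega>, S (Suc n) \<omega>) = x}) = (case x of (lam, p, p') \<Rightarrow>
      if F (map_prod p p' ` lam) = y then prob {\<omega>\<in>space M. L n \<omega> = lam} * (1 / real (card (PS n)) * (1 / real (card (PS (Suc n))))) else 0)"
    proof (cases "F (map_prod p p' ` lam) = y")
      case True
      have "{\<omega>\<in>space M. F (T n \<omega>) = y} \<inter> {\<omega>\<in>space M. (L n \<omega>, S n \<omega>, S (Suc n) \<omega>) = x} = {\<omega>\<in>space M. (L n \<omega>, S n \<omega>, S (Suc n) \<omega>) = (lam, p, p')}"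
        using True unfolding xe by (auto simp: T_def')
      then show ?thesis using True pr3[OF n pp] xe by simp
    next
      case False
      have "{\<omega>\<in>space M. F (T n \<omega>) = y} \<inter> {\<omega>\<in>space M. (L n \<omega>, S n \<omega>, S (Suc n) \<omega>) = x} = {}"
        using False unfolding xe by (auto simp: T_def')
      then show ?thesis using False xe by simp
    qed
  qed
  finally show ?thesis .
qed

lemma T_exch_pt: assumes n: "enat (Suc n) < \<tau>" and \<pi>: "\<pi> permutes Vg X n" and \<pi>': "\<pi>' permutes Vg X (Suc n)"
  shows "prob {\<omega>\<in>space M. map_prod \<pi> \<pi>' ` T n \<omega> = y} = prob {\<omega>\<in>space M. T n \<omega> = y}"
proof -
  let ?c = "\<lambda>lam. prob {\<omega>\<in>space M. L n \<omega> = lam} * (1 / real (card (PS n)) * (1 / real (card (PS (Suc n)))))"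
  define g where "g x = (case x of (lam, p, p') \<Rightarrow> if map_prod p p' ` lam = y then ?c lam else 0)" for x
  define \<psi> :: "edge set \<times> (vert \<Rightarrow> vert) \<times> (vert \<Rightarrow> vert) \<Rightarrow> edge set \<times> (vert \<Rightarrow> vert) \<times> (vert \<Rightarrow> vert)"
    where "\<psi> = map_prod id (map_prod (\<lambda>p. \<pi> \<circ> p) (\<lambda>p. \<pi>' \<circ> p))"
  have bij: "bij_betw \<psi> (LR n \<times> PS n \<times> PS (Suc n)) (LR n \<times> PS n \<times> PS (Suc n))"
    unfolding \<psi>_def PS_def by (intro bij_betw_map_prod bij_betw_id perm_comp_bij \<pi> \<pi>')
  have "prob {\<omega>\<in>space M. map_prod \<pi> \<pi>' ` T n \<omega> = y} = (\<Sum>x\<in>LR n \<times> PS n \<times> PS (Suc n). g (\<psi> x))"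
    unfolding T_sum[OF n, of "\<lambda>e. map_prod \<pi> \<pi>' ` e"]
    by (rule sum.cong[OF refl]) (auto simp: g_def \<psi>_def image_comp map_prod.comp)
  also have "\<dots> = (\<Sum>x\<in>LR n \<times> PS n \<times> PS (Suc n). g x)" by (rule sum.reindex_bij_betw[OF bij])
  also have "\<dots> = prob {\<omega>\<in>space M. T n \<omega> = y}"
    unfolding T_sum[OF n, of "\<lambda>e. e"] g_def ..
  finally show ?thesis .
qed

lemma EXCH: assumes n: "enat (Suc n) < \<tau>"
  shows "exchangeable_layer M X (\<lambda>\<omega>. perm_edges (\<sigma> \<omega>) (E \<omega>)) n"
  unfolding exchangeable_layer_def
proof (intro allI impI)
  fix \<pi> \<pi>' assume \<pi>: "\<pi> permutes Vg X n" and \<pi>': "\<pi>' permutes Vg X (Suc n)"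
  have "distr M (count_space UNIV) (\<lambda>\<omega>. layer X (perm_edges (\<sigma> \<omega>) (E \<omega>)) n) = distr M (count_space UNIV) (T n)"
    by (rule distr_cong) (simp_all add: layer_perm[OF _ n])
  also have "\<dots> = distr M (count_space UNIV) (\<lambda>\<omega>. map_prod \<pi> \<pi>' ` T n \<omega>)"
    by (rule DEQ[OF dv_T[OF n] dv_comp[OF dv_T[OF n]]]) (rule T_exch_pt[OF n \<pi> \<pi>', symmetric])
  also have "\<dots> = distr M (count_space UNIV) (\<lambda>\<omega>. map_prod \<pi> \<pi>' ` layer X (perm_edges (\<sigma> \<omega>) (E \<omega>)) n)"
    by (rule distr_cong) (simp_all add: layer_perm[OF _ n])
  finally show "distr M (count_space UNIV) (\<lambda>\<omega>. layer X (perm_edges (\<sigma> \<omega>) (E \<omega>)) n) =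
      distr M (count_space UNIV) (\<lambda>\<omega>. map_prod \<pi> \<pi>' ` layer X (perm_edges (\<sigma> \<omega>) (E \<omega>)) n)" .
qed

end

theorem theorem3p2:
  fixes M :: "'w measure" and \<tau> :: enat and X :: "nat \<Rightarrow> nat" and k :: "nat \<Rightarrow> nat \<Rightarrow> nat"
    and \<E> :: "'w \<Rightarrow> edge set" and \<sigma> :: "'w \<Rightarrow> vert \<Rightarrow> vert"
  assumes "prob_space M"
    and "genealogy_data \<tau> X k"
    and "genealogy_model M \<tau> X k \<E>"
    and neutral: "forward_neutral M \<tau> X \<E> \<or> backward_neutral M \<tau> X \<E>"
    and "uniform_P M \<tau> X \<sigma>"
    and "indep_rv M
           (PiM {n. enat n < \<tau>} (\<lambda>_. cs)) (\<lambda>\<omega>. \<lambda>n\<in>{n. enat n < \<tau>}. sig X \<sigma> n \<omega>)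
           (PiM {n. enat (Suc n) < \<tau>} (\<lambda>_. cs)) (\<lambda>\<omega>. \<lambda>n\<in>{n. enat (Suc n) < \<tau>}. layer X (\<E> \<omega>) n)"
  shows "completely_neutral M \<tau> X (\<lambda>\<omega>. perm_edges (\<sigma> \<omega>) (\<E> \<omega>)) \<and>
         (forward_neutral M \<tau> X \<E> \<longrightarrow>
           (\<forall>n. indep_rv M
             (PiM {m. n \<le> m \<and> enat (Suc m) < \<tau>} (\<lambda>_. cs))
             (\<lambda>\<omega>. \<lambda>m\<in>{m. n \<le> m \<and> enat (Suc m) < \<tau>}. sig_layer X \<sigma> \<E> m \<omega>)
             (PiM {m. m \<le> n \<and> enat m < \<tau>} (\<lambda>_. cs))
             (\<lambda>\<omega>. \<lambda>m\<in>{m. m \<le> n \<and> enat m < \<tau>}. sig X \<sigma> m \<omega>))) \<and>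
         (backward_neutral M \<tau> X \<E> \<longrightarrow>
           (\<forall>n. indep_rv M
             (PiM {m. m < n \<and> enat (Suc m) < \<tau>} (\<lambda>_. cs))
             (\<lambda>\<omega>. \<lambda>m\<in>{m. m < n \<and> enat (Suc m) < \<tau>}. sig_layer X \<sigma> \<E> m \<omega>)
             (PiM {m. n \<le> m \<and> enat m < \<tau>} (\<lambda>_. cs))
             (\<lambda>\<omega>. \<lambda>m\<in>{m. n \<le> m \<and> enat m < \<tau>}. sig X \<sigma> m \<omega>)))"
proof -
  interpret g: gset M \<tau> X k \<E> \<sigma> using assms(1,2,3,5,6) by (simp add: gset_def)
  have Tfac: "measure M {\<omega>\<in>space M. \<forall>j\<in>J. g.T j \<omega> = t j} = (\<Prod>j\<in>J. measure M {\<omega>\<in>space M. g.T j \<omega> = t j})"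
    if J: "finite J" "J \<subseteq> {m. enat (Suc m) < \<tau>}" for J t
  proof (cases "forward_neutral M \<tau> X \<E>")
    case True
    interpret f: gF M \<tau> X k \<E> \<sigma> using True by unfold_locales
    have "J \<subseteq> {m. 0 \<le> m \<and> enat (Suc m) < \<tau>}" using J(2) by auto
    from f.FWD_T[OF J(1) this] show ?thesis .
  next
    case False
    then have bn: "backward_neutral M \<tau> X \<E>" using neutral by simp
    interpret b: gB M \<tau> X k \<E> \<sigma> using bn by unfold_locales
    show ?thesis by (rule b.BWD_T[OF J])
  qed
  have CN: "completely_neutral M \<tau> X (\<lambda>\<omega>. perm_edges (\<sigma> \<omega>) (\<E> \<omega>))"
    unfolding completely_neutral_def
  proof (intro conjI allI impI)
    show "prob_space.indep_vars M (\<lambda>_. cs) (\<lambda>n \<omega>. layer X (perm_edges (\<sigma> \<omega>) (\<E> \<omega>)) n) {n. enat (Suc n) < \<tau>}"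
    proof (rule g.INDV)
      fix i assume i: "i \<in> {n. enat (Suc n) < \<tau>}"
      show "g.dv (\<lambda>\<omega>. layer X (perm_edges (\<sigma> \<omega>) (\<E> \<omega>)) i)"
        by (rule g.dv_cong[OF g.dv_T]) (use i g.layer_perm in auto)
    next
      fix J t assume J: "J \<subseteq> {n. enat (Suc n) < \<tau>}" "finite J" "J \<noteq> {}"
      have lp: "layer X (perm_edges (\<sigma> \<omega>) (\<E> \<omega>)) j = g.T j \<omega>" if "\<omega> \<in> space M" "j \<in> J" for \<omega> j
        using J(1) g.layer_perm that by blast
      have e1: "{\<omega>\<in>space M. \<forall>j\<in>J. layer X (perm_edges (\<sigma> \<omega>) (\<E> \<omega>)) j = t j} = {\<omega>\<in>space M. \<forall>j\<in>J. g.T j \<omega> = t j}"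
        using lp by (auto simp: lp)
      have e2: "{\<omega>\<in>space M. layer X (perm_edges (\<sigma> \<omega>) (\<E> \<omega>)) j = t j} = {\<omega>\<in>space M. g.T j \<omega> = t j}" if "j \<in> J" for j
        using lp that by auto
      show "measure M {\<omega>\<in>space M. \<forall>j\<in>J. layer X (perm_edges (\<sigma> \<omega>) (\<E> \<omega>)) j = t j} =
          (\<Prod>j\<in>J. measure M {\<omega>\<in>space M. layer X (perm_edges (\<sigma> \<omega>) (\<E> \<omega>)) j = t j})"
        unfolding e1 using Tfac[OF J(2,1), of t] e2 by simp
    qed
  next
    fix n assume n: "enat (Suc n) < \<tau>"
    show "exchangeable_layer M X (\<lambda>\<omega>. perm_edges (\<sigma> \<omega>) (\<E> \<omega>)) n" by (rule g.EXCH[OF n])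
  qed
  have P2a: "forward_neutral M \<tau> X \<E> \<longrightarrow>
           (\<forall>n. indep_rv M
             (PiM {m. n \<le> m \<and> enat (Suc m) < \<tau>} (\<lambda>_. cs))
             (\<lambda>\<omega>. \<lambda>m\<in>{m. n \<le> m \<and> enat (Suc m) < \<tau>}. sig_layer X \<sigma> \<E> m \<omega>)
             (PiM {m. m \<le> n \<and> enat m < \<tau>} (\<lambda>_. cs))
             (\<lambda>\<omega>. \<lambda>m\<in>{m. m \<le> n \<and> enat m < \<tau>}. sig X \<sigma> m \<omega>))"
  proof (intro impI allI)
    fix n assume fn: "forward_neutral M \<tau> X \<E>"
    interpret f: gF M \<tau> X k \<E> \<sigma> using fn by unfold_locales
    show "indep_rv M
             (PiM {m. n \<le> m \<and> enat (Suc m) < \<tau>} (\<lambda>_. cs))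
             (\<lambda>\<omega>. \<lambda>m\<in>{m. n \<le> m \<and> enat (Suc m) < \<tau>}. sig_layer X \<sigma> \<E> m \<omega>)
             (PiM {m. m \<le> n \<and> enat m < \<tau>} (\<lambda>_. cs))
             (\<lambda>\<omega>. \<lambda>m\<in>{m. m \<le> n \<and> enat m < \<tau>}. sig X \<sigma> m \<omega>)"
    proof (rule g.INDRV)
      fix i assume "i \<in> {m. n \<le> m \<and> enat (Suc m) < \<tau>}" then show "g.dv (g.T i)" by (intro g.dv_T) simp
    next
      fix i assume "i \<in> {m. m \<le> n \<and> enat m < \<tau>}" then show "g.dv (g.S i)" by (intro g.dv_S) simp
    next
      fix J J' t u assume J: "J \<subseteq> {m. n \<le> m \<and> enat (Suc m) < \<tau>}" "finite J" and J': "J' \<subseteq> {m. m \<le> n \<and> enat m < \<tau>}" "finite J'"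
      show "measure M {\<omega>\<in>space M. (\<forall>j\<in>J. g.T j \<omega> = t j) \<and> (\<forall>j\<in>J'. g.S j \<omega> = u j)} =
        measure M {\<omega>\<in>space M. \<forall>j\<in>J. g.T j \<omega> = t j} * measure M {\<omega>\<in>space M. \<forall>j\<in>J'. g.S j \<omega> = u j}"
        using f.FWD_IND[OF J(2,1) J'(2,1), of t u] f.FWD_T[OF J(2,1), of t] by simp
    qed
  qed
  have P2b: "backward_neutral M \<tau> X \<E> \<longrightarrow>
           (\<forall>n. indep_rv M
             (PiM {m. m < n \<and> enat (Suc m) < \<tau>} (\<lambda>_. cs))
             (\<lambda>\<omega>. \<lambda>m\<in>{m. m < n \<and> enat (Suc m) < \<tau>}. sig_layer X \<sigma> \<E> m \<omega>)
             (PiM {m. n \<le> m \<and> enat m < \<tau>} (\<lambda>_. cs))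
             (\<lambda>\<omega>. \<lambda>m\<in>{m. n \<le> m \<and> enat m < \<tau>}. sig X \<sigma> m \<omega>))"
  proof (intro impI allI)
    fix n assume bn: "backward_neutral M \<tau> X \<E>"
    interpret b: gB M \<tau> X k \<E> \<sigma> using bn by unfold_locales
    show "indep_rv M
             (PiM {m. m < n \<and> enat (Suc m) < \<tau>} (\<lambda>_. cs))
             (\<lambda>\<omega>. \<lambda>m\<in>{m. m < n \<and> enat (Suc m) < \<tau>}. sig_layer X \<sigma> \<E> m \<omega>)
             (PiM {m. n \<le> m \<and> enat m < \<tau>} (\<lambda>_. cs))
             (\<lambda>\<omega>. \<lambda>m\<in>{m. n \<le> m \<and> enat m < \<tau>}. sig X \<sigma> m \<omega>)"
    proof (rule g.INDRV)
      fix i assume "i \<in> {m. m < n \<and> enat (Suc m) < \<tau>}" then show "g.dv (g.T i)" by (intro g.dv_T) simp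
    next
      fix i assume "i \<in> {m. n \<le> m \<and> enat m < \<tau>}" then show "g.dv (g.S i)" by (intro g.dv_S) simp
    next
      fix J J' t u assume J: "J \<subseteq> {m. m < n \<and> enat (Suc m) < \<tau>}" "finite J" and J': "J' \<subseteq> {m. n \<le> m \<and> enat m < \<tau>}" "finite J'"
      have J2: "J \<subseteq> {m. enat (Suc m) < \<tau>}" using J(1) by auto
      show "measure M {\<omega>\<in>space M. (\<forall>j\<in>J. g.T j \<omega> = t j) \<and> (\<forall>j\<in>J'. g.S j \<omega> = u j)} =
        measure M {\<omega>\<in>space M. \<forall>j\<in>J. g.T j \<omega> = t j} * measure M {\<omega>\<in>space M. \<forall>j\<in>J'. g.S j \<omega> = u j}"
        using b.BWD_IND[OF J(2,1) J'(2,1), of t u] b.BWD_T[OF J(2) J2, of t] by simp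
    qed
  qed
  show ?thesis using CN P2a P2b by blast
qed

end
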